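(* Let $A=(a_{ik})$ be a real symmetric $n\times n$ matrix whose induced signed graph $\Gamma=(T,\sigma)$, $T=(V,E)$, has no cycle. Let $\lambda_k$ be the $k$-th eigenvalue of $A$, of multiplicity $r$, with $$\lambda_1\le\cdots\le\lambda_{k-1}<\lambda_k=\cdots=\lambda_{k+r-1}<\lambda_{k+r}\le\cdots\le\lambda_n$$ (strict inequalities vacuous when indices are out of range), and let $f_k$ be an eigenfunction for $\lambda_k$. Let $\mathcal F=\{x\in V: f_k(x)=0\text{ and }f_k(y)=0\text{ for all }y\sim x\}$. Then $$k+r-1-|\mathcal F|\le\mathfrak{S}(f_k)\le k+r-1\quad\text{and}\quad n-k+1-|\mathcal F|\le\overline{\mathfrak{S}}(f_k)\le n-k+1,$$ where $\overline{\mathfrak{S}}(f_k)$ is the number of strong nodal domains of $f_k$ on $-\Gamma=(T,-\sigma)$.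
   Context: The induced signed graph of a real symmetric $n\times n$ matrix $A$ has vertex set $V=\{x_1,\dots,x_n\}$, edge $\{x_i,x_j\}$ iff $i\ne j$ and $a_{ij}\ne0$, sign $\sigma_{x_ix_j}=-a_{ij}/|a_{ij}|$. Eigenfunctions are nonzero eigenvectors viewed as functions on $V$. A walk is $y_1,\dots,y_m$ ($m\ge2$) with consecutive vertices adjacent; for a signature $\sigma$, an S-walk of $f$ is a walk with $f(y_j)\sigma_{y_jy_{j+1}}f(y_{j+1})>0$ for all $j$. The strong nodal domains of $f$ on $(T,\sigma)$ are the induced subgraphs on the equivalence classes of the relation on $\{x:f(x)\ne0\}$ "$x=y$ or an S-walk connects $x$ and $y$"; $\mathfrak{S}(f)$ denotes their number on $\Gamma=(T,\sigma)$. *)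

theory Defs
  imports "Jordan_Normal_Form.Char_Poly"
begin

text \<open>Induced signed graph of a real n x n matrix A: vertices 0..<n (vertex i stands for x_(i+1)).\<close>

definition adj :: "real mat \<Rightarrow> nat \<Rightarrow> nat \<Rightarrow> bool" where
  "adj A i j \<longleftrightarrow> i < dim_row A \<and> j < dim_row A \<and> i \<noteq> j \<and> A $$ (i, j) \<noteq> 0"

definition sig :: "real mat \<Rightarrow> nat \<Rightarrow> nat \<Rightarrow> real" where
  "sig A i j = - A $$ (i, j) / \<bar>A $$ (i, j)\<bar>"

definition has_cycle :: "real mat \<Rightarrow> bool" where
  "has_cycle A \<longleftrightarrow> (\<exists>cs. length cs \<ge> 3 \<and> distinct cs \<and>
      (\<forall>j < length cs - 1. adj A (cs ! j) (cs ! Suc j)) \<and> adj A (last cs) (hd cs))"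

definition is_walk :: "real mat \<Rightarrow> nat list \<Rightarrow> bool" where
  "is_walk A ys \<longleftrightarrow> length ys \<ge> 2 \<and> (\<forall>j < length ys - 1. adj A (ys ! j) (ys ! Suc j))"

definition S_walk :: "real mat \<Rightarrow> (nat \<Rightarrow> nat \<Rightarrow> real) \<Rightarrow> real vec \<Rightarrow> nat list \<Rightarrow> bool" where
  "S_walk A s f ys \<longleftrightarrow> is_walk A ys \<and>
     (\<forall>j < length ys - 1. f $ (ys ! j) * s (ys ! j) (ys ! Suc j) * f $ (ys ! Suc j) > 0)"

definition nodal_rel :: "real mat \<Rightarrow> (nat \<Rightarrow> nat \<Rightarrow> real) \<Rightarrow> real vec \<Rightarrow> (nat \<times> nat) set" where
  "nodal_rel A s f = {(x, y). x < dim_row A \<and> y < dim_row A \<and> f $ x \<noteq> 0 \<and> f $ y \<noteq> 0 \<and>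
      (x = y \<or> (\<exists>ys. S_walk A s f ys \<and> hd ys = x \<and> last ys = y))}"

definition strong_nodal_count :: "real mat \<Rightarrow> (nat \<Rightarrow> nat \<Rightarrow> real) \<Rightarrow> real vec \<Rightarrow> nat" where
  "strong_nodal_count A s f = card ({x. x < dim_row A \<and> f $ x \<noteq> 0} // nodal_rel A s f)"

end

theory Submission imports Defs "Jordan_Normal_Form.Jordan_Normal_Form_Uniqueness" "Jordan_Normal_Form.Jordan_Normal_Form_Existence" begin


lemma sum_min2_eq_min1:
  assumes "sum_list (map (min (2::nat)) xs) = sum_list (map (min 1) xs)"
  shows "\<forall>x\<in>set xs. x \<le> 1"
proof -
  have ge: "\<And>ys. sum_list (map (min (1::nat)) ys) \<le> sum_list (map (min 2) ys)"
    by (intro sum_list_mono) auto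
  show ?thesis using assms
  proof (induction xs)
    case Nil then show ?case by simp
  next
    case (Cons a xs)
    have "min 1 a \<le> min 2 a" by auto
    with Cons.prems ge[of xs] have "min 2 a = min (1::nat) a" and
      "sum_list (map (min (2::nat)) xs) = sum_list (map (min 1) xs)" by auto
    then show ?case using Cons.IH by auto
  qed
qed

lemma char_matrix_sym:
  assumes A: "A \<in> carrier_mat n n" and sym: "A\<^sup>T = A"
  shows "(char_matrix A e)\<^sup>T = char_matrix A e"
proof (rule eq_matI)
  fix i j assume "i < dim_row (char_matrix A e)" "j < dim_col (char_matrix A e)"
  then have ij: "i < n" "j < n" using char_matrix_closed[OF A, of e] by auto
  have "A $$ (j,i) = A $$ (i,j)" using sym ij A
    by (metis carrier_matD(1) carrier_matD(2) index_transpose_mat(1))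
  then show "(char_matrix A e)\<^sup>T $$ (i, j) = char_matrix A e $$ (i, j)"
    using ij A by (auto simp: char_matrix_def)
qed (use char_matrix_closed[OF A, of e] in auto)

lemma sym_kernel_sq:
  fixes C :: "real mat"
  assumes C: "C \<in> carrier_mat n n" and sym: "C\<^sup>T = C"
  shows "mat_kernel (C ^\<^sub>m 2) = mat_kernel (C ^\<^sub>m 1)"
proof -
  have C2: "C ^\<^sub>m 2 = C * C" using C by (simp add: numeral_2_eq_2)
  have C1: "C ^\<^sub>m 1 = C" using C by simp
  have "v \<in> mat_kernel (C * C) \<longleftrightarrow> v \<in> mat_kernel C" for v
  proof
    assume v: "v \<in> mat_kernel (C * C)"
    then have vc: "v \<in> carrier_vec n" and z: "(C * C) *\<^sub>v v = 0\<^sub>v n"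
      using C unfolding mat_kernel_def by auto
    define w where "w = C *\<^sub>v v"
    have wc: "w \<in> carrier_vec n" using C vc w_def by auto
    have Cw: "C *\<^sub>v w = 0\<^sub>v n" using z C vc unfolding w_def
      by (simp add: assoc_mult_mat_vec)
    have "w \<bullet> w = (C\<^sup>T *\<^sub>v v) \<bullet> w" using sym w_def by simp
    also have "\<dots> = v \<bullet> (C *\<^sub>v w)" by (rule transpose_vec_mult_scalar[OF C wc vc])
    also have "\<dots> = 0" using Cw vc by simp
    finally have "w \<bullet>c w = 0" by (simp add: conjugate_real_def[abs_def] conjugate_vec_def)
    then have "w = 0\<^sub>v n" using conjugate_square_eq_0_vec[OF wc] by simp
    then show "v \<in> mat_kernel C" using vc C unfolding mat_kernel_def w_def by auto
  next
    assume v: "v \<in> mat_kernel C"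
    then have vc: "v \<in> carrier_vec n" and z: "C *\<^sub>v v = 0\<^sub>v n"
      using C unfolding mat_kernel_def by auto
    have "(C * C) *\<^sub>v v = C *\<^sub>v (C *\<^sub>v v)" using C vc by (simp add: assoc_mult_mat_vec)
    also have "\<dots> = 0\<^sub>v n" using z C by (intro eq_vecI) (auto simp: scalar_prod_def)
    finally show "v \<in> mat_kernel (C * C)" using vc C unfolding mat_kernel_def by auto
  qed
  then show ?thesis unfolding C2 C1 by auto
qed


lemma jordan_matrix_diag:
  assumes "\<forall>x\<in>set n_as. fst x = 1"
  shows "dim_row (jordan_matrix n_as) = length n_as \<and> dim_col (jordan_matrix n_as) = length n_as \<and>
    (\<forall>i j. i < length n_as \<longrightarrow> j < length n_as \<longrightarrow>
      jordan_matrix n_as $$ (i,j) = (if i = j then snd (n_as ! i) else (0::real)))"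
  using assms
proof (induction n_as)
  case Nil
  then show ?case by (simp add: jordan_matrix_def)
next
  case (Cons na n_as)
  obtain m a where na: "na = (m,a)" by force
  with Cons.prems have m: "m = 1" by auto
  have sl: "sum_list (map fst n_as) = length n_as" using Cons.prems
    by (induction n_as) auto
  from Cons have IH: "dim_row (jordan_matrix n_as) = length n_as" "dim_col (jordan_matrix n_as) = length n_as"
    "\<And>i j. i < length n_as \<Longrightarrow> j < length n_as \<Longrightarrow>
      jordan_matrix n_as $$ (i,j) = (if i = j then snd (n_as ! i) else (0::real))" by auto
  have J: "jordan_matrix (na # n_as) = four_block_mat (jordan_block 1 a) (0\<^sub>m 1 (length n_as))
     (0\<^sub>m (length n_as) 1) (jordan_matrix n_as)"
    unfolding na m jordan_matrix_Cons sl ..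
  show ?case
  proof (intro conjI allI impI)
    show "dim_row (jordan_matrix (na # n_as)) = length (na # n_as)"
      unfolding J using IH by simp
    show "dim_col (jordan_matrix (na # n_as)) = length (na # n_as)"
      unfolding J using IH by simp
    fix i j assume i: "i < length (na # n_as)" and j: "j < length (na # n_as)"
    show "jordan_matrix (na # n_as) $$ (i,j) = (if i = j then snd ((na # n_as) ! i) else 0)"
      unfolding J using i j IH
      by (cases i; cases j) (auto simp: index_mat_four_block na)
  qed
qed

lemma spectral:
  fixes A :: "real mat"
  assumes A: "A \<in> carrier_mat n n" and sym: "A\<^sup>T = A"
    and cp: "char_poly A = (\<Prod>a\<leftarrow>es. [:- a, 1:])"
  shows "\<exists>P d. (\<forall>i<n. \<forall>x<n. (\<Sum>y<n. A $$ (x,y) * P $$ (y,i)) = d i * P $$ (x,i))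
     \<and> (\<forall>\<beta>. (\<forall>x<n. (\<Sum>i<n. \<beta> i * P $$ (x,i)) = 0) \<longrightarrow> (\<forall>i<n. \<beta> i = 0))
     \<and> mset (map d [0..<n]) = mset es"
proof -
  obtain n_as where jnf: "jordan_nf A n_as" using jordan_nf_exists[OF A cp] by blast
  have no0: "0 \<notin> fst ` set n_as" and sim: "similar_mat A (jordan_matrix n_as)"
    using jnf unfolding jordan_nf_def by auto
  have sizes: "\<forall>x\<in>set n_as. fst x = 1"
  proof
    fix x assume x: "x \<in> set n_as"
    obtain m ev where xe: "x = (m, ev)" by force
    let ?C = "char_matrix A ev"
    have C: "?C \<in> carrier_mat n n" using A by simp
    have Csym: "?C\<^sup>T = ?C" by (rule char_matrix_sym[OF A sym])
    have "dim_gen_eigenspace A ev 2 = dim_gen_eigenspace A ev 1"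
      unfolding dim_gen_eigenspace_def kernel_dim_def
      using sym_kernel_sq[OF C Csym] C by simp
    then have "sum_list (map (min 2) (map fst [(n, e)\<leftarrow>n_as . e = ev]))
       = sum_list (map (min 1) (map fst [(n, e)\<leftarrow>n_as . e = ev]))"
      unfolding dim_gen_eigenspace[OF jnf] by simp
    from sum_min2_eq_min1[OF this] have "m \<le> 1" using x xe by force
    moreover have "m \<noteq> 0" using no0 x xe by force
    ultimately show "fst x = 1" using xe by simp
  qed
  note JD = jordan_matrix_diag[OF sizes]
  define J where "J = jordan_matrix n_as"
  obtain P Q where wit: "similar_mat_wit A J P Q" using sim unfolding similar_mat_def J_def by blast
  have PQ: "P \<in> carrier_mat n n" "Q \<in> carrier_mat n n" "J \<in> carrier_mat n n"
    "P * Q = 1\<^sub>m n" "Q * P = 1\<^sub>m n" "A = P * J * Q"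
    using wit A unfolding similar_mat_wit_def Let_def by auto
  have len: "length n_as = n" using JD PQ(3) unfolding J_def by auto
  define d where "d i = snd (n_as ! i)" for i
  have Jij: "\<And>i j. i < n \<Longrightarrow> j < n \<Longrightarrow> J $$ (i,j) = (if i = j then d i else 0)"
    using JD len unfolding J_def d_def by auto
  have AP: "A * P = P * J"
  proof -
    have "A * P = P * J * (Q * P)" using PQ by (simp add: assoc_mult_mat[of _ n n _ n _ n])
    also have "\<dots> = P * J" using PQ by simp
    finally show ?thesis .
  qed
  have eig: "\<forall>i<n. \<forall>x<n. (\<Sum>y<n. A $$ (x,y) * P $$ (y,i)) = d i * P $$ (x,i)"
  proof (intro allI impI)
    fix i x assume i: "i < n" and x: "x < n"
    have "(A * P) $$ (x,i) = (\<Sum>y<n. A $$ (x,y) * P $$ (y,i))"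
      using A PQ i x by (simp add: scalar_prod_def atLeast0LessThan)
    moreover have "(P * J) $$ (x,i) = (\<Sum>y<n. P $$ (x,y) * J $$ (y,i))"
      using A PQ i x by (simp add: scalar_prod_def atLeast0LessThan)
    moreover have "(\<Sum>y<n. P $$ (x,y) * J $$ (y,i)) = (\<Sum>y<n. P $$ (x,y) * (if y = i then d i else 0))"
      using Jij i by (intro sum.cong) auto
    moreover have "\<dots> = d i * P $$ (x,i)"
      using i by (simp add: if_distrib cong: if_cong)
    ultimately show "(\<Sum>y<n. A $$ (x,y) * P $$ (y,i)) = d i * P $$ (x,i)" using AP by simp
  qed
  have indep: "\<forall>\<beta>. (\<forall>x<n. (\<Sum>i<n. \<beta> i * P $$ (x,i)) = 0) \<longrightarrow> (\<forall>i<n. \<beta> i = 0)"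
  proof (intro allI impI)
    fix \<beta> i assume z: "\<forall>x<n. (\<Sum>i<n. \<beta> i * P $$ (x,i)) = 0" and i: "i < n"
    have QP: "\<And>j. j < n \<Longrightarrow> (\<Sum>x<n. Q $$ (i,x) * P $$ (x,j)) = (if i = j then 1 else 0)"
    proof -
      fix j assume j: "j < n"
      have "(Q * P) $$ (i,j) = (\<Sum>x<n. Q $$ (i,x) * P $$ (x,j))"
        using PQ(1,2) i j by (simp add: scalar_prod_def atLeast0LessThan)
      moreover have "(Q * P) $$ (i,j) = (if i = j then 1 else 0)" using PQ(5) i j by simp
      ultimately show "(\<Sum>x<n. Q $$ (i,x) * P $$ (x,j)) = (if i = j then 1 else 0)"
        by simp
    qed
    have "\<beta> i = (\<Sum>j<n. \<beta> j * (if i = j then 1 else 0))" using i by (simp add: if_distrib cong: if_cong)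
    also have "\<dots> = (\<Sum>j<n. \<beta> j * (\<Sum>x<n. Q $$ (i,x) * P $$ (x,j)))" using QP by simp
    also have "\<dots> = (\<Sum>j<n. \<Sum>x<n. Q $$ (i,x) * (\<beta> j * P $$ (x,j)))"
      by (simp add: sum_distrib_left mult_ac)
    also have "\<dots> = (\<Sum>x<n. \<Sum>j<n. Q $$ (i,x) * (\<beta> j * P $$ (x,j)))"
      by (rule sum.swap)
    also have "\<dots> = (\<Sum>x<n. Q $$ (i,x) * (\<Sum>j<n. \<beta> j * P $$ (x,j)))"
      by (simp add: sum_distrib_left)
    also have "\<dots> = 0" using z by simp
    finally show "\<beta> i = 0" .
  qed
  have "char_poly J = (\<Prod>(m, a)\<leftarrow>n_as. [:- a, 1:] ^ m)" unfolding J_def by (rule jordan_matrix_char_poly)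
  also have "\<dots> = (\<Prod>a\<leftarrow>map d [0..<n]. [:- a, 1:])"
  proof -
    have "map d [0..<n] = map snd n_as" unfolding d_def len[symmetric] by (rule nth_equalityI) auto
    moreover have "\<And>xs::(nat \<times> real) list. \<forall>x\<in>set xs. fst x = 1 \<Longrightarrow>
       (\<Prod>(m, a)\<leftarrow>xs. [:- a, 1:] ^ m) = (\<Prod>a\<leftarrow>map snd xs. [:- a, 1:])"
    proof -
      fix xs :: "(nat \<times> real) list" assume "\<forall>x\<in>set xs. fst x = 1"
      then show "(\<Prod>(m, a)\<leftarrow>xs. [:- a, 1:] ^ m) = (\<Prod>a\<leftarrow>map snd xs. [:- a, 1:])"
        by (induction xs) auto
    qed
    ultimately show ?thesis using sizes by simp
  qed
  finally have "(\<Prod>a\<leftarrow>map d [0..<n]. [:- a, 1:]) = (\<Prod>a\<leftarrow>es. [:- a, 1:])"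
    using char_poly_similar[OF sim] cp unfolding J_def by simp
  then have "proots (\<Prod>a\<leftarrow>map d [0..<n]. [:- a, 1:]) = proots (\<Prod>a\<leftarrow>es. [:- a, 1:])" by simp
  moreover have "\<And>xs. proots (\<Prod>a\<leftarrow>xs. [:- a, (1::real):]) = mset xs"
  proof -
    fix xs :: "real list"
    show "proots (\<Prod>a\<leftarrow>xs. [:- a, (1::real):]) = mset xs"
    proof (induction xs)
      case Nil then show ?case by simp
    next
      case (Cons a xs)
      have nz: "(\<Prod>a\<leftarrow>xs. [:- a, (1::real):]) \<noteq> 0" by (auto simp: prod_list_zero_iff)
      have "proots (\<Prod>a\<leftarrow>a#xs. [:- a, (1::real):]) = proots ([:-a,1:] * (\<Prod>a\<leftarrow>xs. [:- a, (1::real):]))"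
        by (simp only: list.map prod_list.Cons)
      also have "\<dots> = proots [:-a,1:] + proots (\<Prod>a\<leftarrow>xs. [:- a, (1::real):])"
        by (rule proots_mult) (simp, rule nz)
      also have "\<dots> = mset (a # xs)" using Cons.IH proots_linear_factor[of "-a"] by simp
      finally show ?case .
    qed
  qed
  ultimately have "mset (map d [0..<n]) = mset es" by metis
  with eig indep show ?thesis by blast
qed


lemma homog_aux:
  shows "\<forall>(L::('a \<Rightarrow> real) list) (T::'a set). length L = k \<longrightarrow> finite T \<longrightarrow> length L < card T \<longrightarrow>
     (\<exists>c. (\<exists>t\<in>T. c t \<noteq> 0) \<and> (\<forall>l\<in>set L. (\<Sum>t\<in>T. l t * c t) = 0))"
proof (induction k)
  case 0
  show ?case
  proof (intro allI impI)
    fix L :: "('a \<Rightarrow> real) list" and T :: "'a set" assume "length L = 0" "finite T" "length L < card T"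
    then obtain t where "t \<in> T" "L = []" by (metis card.empty ex_in_conv less_nat_zero_code length_0_conv)
    then show "\<exists>c. (\<exists>t\<in>T. c t \<noteq> 0) \<and> (\<forall>l\<in>set L. (\<Sum>t\<in>T. l t * c t) = 0)"
      by (intro exI[of _ "\<lambda>_. 1"]) auto
  qed
next
  case (Suc k)
  show ?case
  proof (intro allI impI)
    fix L :: "('a \<Rightarrow> real) list" and T :: "'a set" assume len: "length L = Suc k" and fin: "finite T"
      and lc: "length L < card T"
    obtain l0 L0 where L: "L = l0 # L0" and len0: "length L0 = k" using len by (cases L) auto
    show "\<exists>c. (\<exists>t\<in>T. c t \<noteq> 0) \<and> (\<forall>l\<in>set L. (\<Sum>t\<in>T. l t * c t) = 0)"
    proof (cases "\<forall>t\<in>T. l0 t = 0")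
      case True
      have "length L0 < card T" using lc L by simp
      from Suc.IH[rule_format, OF len0 fin this] obtain c where
        c: "(\<exists>t\<in>T. c t \<noteq> 0)" "(\<forall>l\<in>set L0. (\<Sum>t\<in>T. l t * c t) = 0)" by blast
      then show ?thesis using True L by (intro exI[of _ c]) auto
    next
      case False
      then obtain t0 where t0: "t0 \<in> T" "l0 t0 \<noteq> 0" by auto
      define T' where "T' = T - {t0}"
      have fT': "finite T'" using fin T'_def by auto
      have cT': "card T' = card T - 1" using t0 fin unfolding T'_def by simp
      define L' where "L' = map (\<lambda>l t. l t - l t0 * l0 t / l0 t0) L0"
      have lt: "length L' < card T'" using lc cT' L unfolding L'_def by simp
      have lk: "length L' = k" using len0 unfolding L'_def by simp
      from Suc.IH[rule_format, OF lk fT' lt] obtain c' where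
        c': "(\<exists>t\<in>T'. c' t \<noteq> 0)" "(\<forall>l\<in>set L'. (\<Sum>t\<in>T'. l t * c' t) = 0)"
        by blast
      define c where "c t = (if t = t0 then - (\<Sum>s\<in>T'. l0 s * c' s) / l0 t0 else c' t)" for t
      have split: "\<And>g. (\<Sum>t\<in>T. g t) = g t0 + (\<Sum>t\<in>T'. g t)"
        unfolding T'_def using t0 fin by (simp add: sum.remove)
      have cT'eq: "\<And>t. t \<in> T' \<Longrightarrow> c t = c' t" unfolding c_def T'_def by auto
      have sumT': "\<And>g. (\<Sum>t\<in>T'. g t * c t) = (\<Sum>t\<in>T'. g t * c' t)"
        using cT'eq by (intro sum.cong) auto
      have e0: "(\<Sum>t\<in>T. l0 t * c t) = 0"
        unfolding split sumT' using t0 by (simp add: c_def)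
      have eL: "(\<Sum>t\<in>T. l t * c t) = 0" if l: "l \<in> set L0" for l
      proof -
        have "(\<lambda>t. l t - l t0 * l0 t / l0 t0) \<in> set L'" using l unfolding L'_def by auto
        then have "(\<Sum>t\<in>T'. (l t - l t0 * l0 t / l0 t0) * c' t) = 0" using c' by auto
        then have "(\<Sum>t\<in>T'. l t * c' t) - l t0 / l0 t0 * (\<Sum>t\<in>T'. l0 t * c' t) = 0"
          by (simp add: algebra_simps sum_subtractf sum_distrib_left)
        then show ?thesis unfolding split sumT' using t0 by (simp add: c_def field_simps)
      qed
      have "\<exists>t\<in>T. c t \<noteq> 0" using c' cT'eq unfolding T'_def by force
      with e0 eL L show ?thesis by (intro exI[of _ c]) auto
    qed
  qed
qed

lemma homog:
  fixes L :: "('a \<Rightarrow> real) list"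
  assumes "finite T" "length L < card T"
  shows "\<exists>c. (\<exists>t\<in>T. c t \<noteq> 0) \<and> (\<forall>l\<in>set L. (\<Sum>t\<in>T. l t * c t) = 0)"
  using homog_aux[of "length L"] assms by blast

definition Qf :: "nat \<Rightarrow> (nat \<Rightarrow> nat \<Rightarrow> real) \<Rightarrow> (nat \<Rightarrow> real) \<Rightarrow> real" where
  "Qf n m h = (\<Sum>x<n. \<Sum>y<n. h x * m x y * h y)"

locale eigsys =
  fixes n :: nat and a :: "nat \<Rightarrow> nat \<Rightarrow> real" and p :: "nat \<Rightarrow> nat \<Rightarrow> real" and d :: "nat \<Rightarrow> real"
  assumes sym: "\<And>x y. x < n \<Longrightarrow> y < n \<Longrightarrow> a x y = a y x"
    and eig: "\<And>i x. i < n \<Longrightarrow> x < n \<Longrightarrow> (\<Sum>y<n. a x y * p i y) = d i * p i x"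
    and indep: "\<And>\<beta>. (\<forall>x<n. (\<Sum>i<n. \<beta> i * p i x) = 0) \<Longrightarrow> (\<forall>i<n. \<beta> i = 0)"
begin

lemma orth:
  assumes i: "i < n" and j: "j < n" and dij: "d i \<noteq> d j"
  shows "(\<Sum>x<n. p i x * p j x) = 0"
proof -
  have "d i * (\<Sum>x<n. p i x * p j x) = (\<Sum>x<n. (\<Sum>y<n. a x y * p i y) * p j x)"
    using eig[OF i] by (simp add: sum_distrib_left mult_ac)
  also have "\<dots> = (\<Sum>x<n. \<Sum>y<n. a x y * p i y * p j x)" by (simp add: sum_distrib_right)
  also have "\<dots> = (\<Sum>y<n. \<Sum>x<n. a x y * p i y * p j x)" by (rule sum.swap)
  also have "\<dots> = (\<Sum>y<n. p i y * (\<Sum>x<n. a y x * p j x))"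
    using sym by (simp add: sum_distrib_left mult_ac)
  also have "\<dots> = d j * (\<Sum>x<n. p i x * p j x)"
    using eig[OF j] by (simp add: sum_distrib_left mult_ac)
  finally have "(d i - d j) * (\<Sum>x<n. p i x * p j x) = 0" by (simp add: algebra_simps)
  then show ?thesis using dij by simp
qed

lemma extend_sum:
  assumes "T \<subseteq> {..<n}"
  shows "(\<Sum>i<n. (if i \<in> T then f i else 0)) = (\<Sum>i\<in>T. f i)"
proof -
  have "(\<Sum>i<n. (if i \<in> T then f i else 0)) = sum f ({..<n} \<inter> T)"
    by (simp add: sum.inter_restrict)
  also have "{..<n} \<inter> T = T" using assms by auto
  finally show ?thesis .
qed

lemma combo_nonzero:
  assumes T: "T \<subseteq> {..<n}" and nz: "\<exists>i\<in>T. \<beta> i \<noteq> 0"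
  shows "\<exists>x<n. (\<Sum>i\<in>T. \<beta> i * p i x) \<noteq> 0"
proof (rule ccontr)
  assume nt: "\<not> ?thesis"
  have "\<forall>x<n. (\<Sum>i<n. (if i \<in> T then \<beta> i else 0) * p i x) = 0"
  proof (intro allI impI)
    fix x assume x: "x < n"
    have "(\<Sum>i<n. (if i \<in> T then \<beta> i else 0) * p i x) = (\<Sum>i<n. (if i \<in> T then \<beta> i * p i x else 0))"
      by (intro sum.cong) auto
    also have "\<dots> = (\<Sum>i\<in>T. \<beta> i * p i x)" by (rule extend_sum[OF T])
    finally show "(\<Sum>i<n. (if i \<in> T then \<beta> i else 0) * p i x) = 0" using nt x by auto
  qed
  from indep[OF this] nz T show False by force
qed

lemma Qf_combo:
  fixes \<beta> :: "nat \<Rightarrow> real" and \<mu> :: real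
  assumes T: "T \<subseteq> {..<n}"
  defines "h \<equiv> \<lambda>x. (\<Sum>i\<in>T. \<beta> i * p i x)"
  shows "Qf n (\<lambda>x y. a x y - (if x = y then \<mu> else 0)) h
     = (\<Sum>i\<in>T. \<Sum>j\<in>T. \<beta> i * \<beta> j * (d j - \<mu>) * (\<Sum>x<n. p i x * p j x))"
proof -
  have fT: "finite T" using T finite_subset by blast
  have Mh: "(\<Sum>y<n. (a x y - (if x = y then \<mu> else 0)) * h y) = (\<Sum>j\<in>T. \<beta> j * (d j - \<mu>) * p j x)"
    if x: "x < n" for x
  proof -
    have "(\<Sum>y<n. (a x y - (if x = y then \<mu> else 0)) * h y) = (\<Sum>y<n. a x y * h y) - (\<Sum>y<n. (if x = y then \<mu> else 0) * h y)"
      by (simp add: left_diff_distrib sum_subtractf)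
    also have "(\<Sum>y<n. (if x = y then \<mu> else 0) * h y) = (\<Sum>y<n. if x = y then \<mu> * h y else 0)"
      by (intro sum.cong) auto
    also have "\<dots> = \<mu> * h x" using x by simp
    also have "(\<Sum>y<n. a x y * h y) = (\<Sum>j\<in>T. \<beta> j * (\<Sum>y<n. a x y * p j y))"
    proof -
      have "(\<Sum>y<n. a x y * h y) = (\<Sum>y<n. \<Sum>j\<in>T. \<beta> j * (a x y * p j y))"
        unfolding h_def by (simp add: sum_distrib_left mult_ac)
      also have "\<dots> = (\<Sum>j\<in>T. \<Sum>y<n. \<beta> j * (a x y * p j y))" by (rule sum.swap)
      also have "\<dots> = (\<Sum>j\<in>T. \<beta> j * (\<Sum>y<n. a x y * p j y))" by (simp add: sum_distrib_left)
      finally show ?thesis .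
    qed
    also have "\<dots> = (\<Sum>j\<in>T. \<beta> j * (d j * p j x))"
      using eig x T by (intro sum.cong) auto
    finally show ?thesis unfolding h_def
      by (simp add: algebra_simps sum_subtractf sum_distrib_left)
  qed
  have "Qf n (\<lambda>x y. a x y - (if x = y then \<mu> else 0)) h
      = (\<Sum>x<n. h x * (\<Sum>y<n. (a x y - (if x = y then \<mu> else 0)) * h y))"
    unfolding Qf_def by (simp add: sum_distrib_left mult_ac)
  also have "\<dots> = (\<Sum>x<n. h x * (\<Sum>j\<in>T. \<beta> j * (d j - \<mu>) * p j x))"
    using Mh by simp
  also have "\<dots> = (\<Sum>x<n. \<Sum>i\<in>T. \<Sum>j\<in>T. (\<beta> i * p i x) * (\<beta> j * (d j - \<mu>) * p j x))"
    by (simp only: h_def sum_product)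
  also have "\<dots> = (\<Sum>x<n. \<Sum>i\<in>T. \<Sum>j\<in>T. \<beta> i * \<beta> j * (d j - \<mu>) * (p i x * p j x))"
    by (simp add: mult_ac)
  also have "\<dots> = (\<Sum>i\<in>T. \<Sum>x<n. \<Sum>j\<in>T. \<beta> i * \<beta> j * (d j - \<mu>) * (p i x * p j x))"
    by (rule sum.swap)
  also have "\<dots> = (\<Sum>i\<in>T. \<Sum>j\<in>T. \<Sum>x<n. \<beta> i * \<beta> j * (d j - \<mu>) * (p i x * p j x))"
    by (intro sum.cong refl sum.swap)
  also have "\<dots> = (\<Sum>i\<in>T. \<Sum>j\<in>T. \<beta> i * \<beta> j * (d j - \<mu>) * (\<Sum>x<n. p i x * p j x))"
    by (simp add: sum_distrib_left)
  finally show ?thesis .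
qed

lemma sq_combo:
  fixes g :: "nat \<Rightarrow> real"
  shows "(\<Sum>x<n. (\<Sum>i\<in>T. g i * p i x)^2)
     = (\<Sum>i\<in>T. \<Sum>j\<in>T. g i * g j * (\<Sum>x<n. p i x * p j x))"
proof -
  have "(\<Sum>x<n. (\<Sum>i\<in>T. g i * p i x)^2) = (\<Sum>x<n. \<Sum>i\<in>T. \<Sum>j\<in>T. g i * g j * (p i x * p j x))"
    by (simp add: power2_eq_square sum_distrib_left sum_distrib_right mult_ac)
  also have "\<dots> = (\<Sum>i\<in>T. \<Sum>x<n. \<Sum>j\<in>T. g i * g j * (p i x * p j x))"
    by (rule sum.swap)
  also have "\<dots> = (\<Sum>i\<in>T. \<Sum>j\<in>T. \<Sum>x<n. g i * g j * (p i x * p j x))"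
    by (intro sum.cong refl sum.swap)
  also have "\<dots> = (\<Sum>i\<in>T. \<Sum>j\<in>T. g i * g j * (\<Sum>x<n. p i x * p j x))"
    by (simp add: sum_distrib_left)
  finally show ?thesis .
qed

lemma Q_sign:
  fixes \<beta> :: "nat \<Rightarrow> real" and \<mu> :: real
  assumes T: "T \<subseteq> {..<n}"
  defines "h \<equiv> \<lambda>x. (\<Sum>i\<in>T. \<beta> i * p i x)"
  defines "g \<equiv> \<lambda>i. \<beta> i * sqrt \<bar>d i - \<mu>\<bar>"
  shows "(\<forall>i\<in>T. d i \<le> \<mu>) \<Longrightarrow> Qf n (\<lambda>x y. a x y - (if x = y then \<mu> else 0)) h
            = - (\<Sum>x<n. (\<Sum>i\<in>T. g i * p i x)^2)"
    and "(\<forall>i\<in>T. d i \<ge> \<mu>) \<Longrightarrow> Qf n (\<lambda>x y. a x y - (if x = y then \<mu> else 0)) h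
            = (\<Sum>x<n. (\<Sum>i\<in>T. g i * p i x)^2)"
proof -
  have key: "g i * g j * (\<Sum>x<n. p i x * p j x) = \<bar>d j - \<mu>\<bar> * \<beta> i * \<beta> j * (\<Sum>x<n. p i x * p j x)"
    if "i \<in> T" "j \<in> T" for i j
  proof (cases "d i = d j")
    case True
    have "sqrt \<bar>d j - \<mu>\<bar> * sqrt \<bar>d j - \<mu>\<bar> = \<bar>d j - \<mu>\<bar>" by simp
    then show ?thesis unfolding g_def True by (simp add: mult_ac)
  next
    case False
    then show ?thesis using orth that T by auto
  qed
  {
    assume le: "\<forall>i\<in>T. d i \<le> \<mu>"
    have k2: "\<beta> i * \<beta> j * (d j - \<mu>) * (\<Sum>x<n. p i x * p j x) = - (g i * g j * (\<Sum>x<n. p i x * p j x))"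
      if ij: "i \<in> T" "j \<in> T" for i j
    proof -
      have "\<bar>d j - \<mu>\<bar> = - (d j - \<mu>)" using le ij by simp
      then have e: "g i * g j * (\<Sum>x<n. p i x * p j x) = - (d j - \<mu>) * \<beta> i * \<beta> j * (\<Sum>x<n. p i x * p j x)"
        using key[OF ij] by metis
      show ?thesis unfolding e by (simp add: algebra_simps)
    qed
    have "Qf n (\<lambda>x y. a x y - (if x = y then \<mu> else 0)) h
       = (\<Sum>i\<in>T. \<Sum>j\<in>T. - (g i * g j * (\<Sum>x<n. p i x * p j x)))"
      unfolding h_def Qf_combo[OF T]
      using k2 by (intro sum.cong refl) auto
    also have "\<dots> = - (\<Sum>x<n. (\<Sum>i\<in>T. g i * p i x)^2)"
      unfolding sq_combo by (simp add: sum_negf)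
    finally show "Qf n (\<lambda>x y. a x y - (if x = y then \<mu> else 0)) h
            = - (\<Sum>x<n. (\<Sum>i\<in>T. g i * p i x)^2)" .
  }
  {
    assume ge: "\<forall>i\<in>T. d i \<ge> \<mu>"
    have k2: "\<beta> i * \<beta> j * (d j - \<mu>) * (\<Sum>x<n. p i x * p j x) = (g i * g j * (\<Sum>x<n. p i x * p j x))"
      if ij: "i \<in> T" "j \<in> T" for i j
    proof -
      have "\<bar>d j - \<mu>\<bar> = (d j - \<mu>)" using ge ij by simp
      then have e: "g i * g j * (\<Sum>x<n. p i x * p j x) = (d j - \<mu>) * \<beta> i * \<beta> j * (\<Sum>x<n. p i x * p j x)"
        using key[OF ij] by metis
      show ?thesis unfolding e by (simp add: algebra_simps)
    qed
    have "Qf n (\<lambda>x y. a x y - (if x = y then \<mu> else 0)) h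
       = (\<Sum>i\<in>T. \<Sum>j\<in>T. (g i * g j * (\<Sum>x<n. p i x * p j x)))"
      unfolding h_def Qf_combo[OF T]
      using k2 by (intro sum.cong refl) auto
    also have "\<dots> = (\<Sum>x<n. (\<Sum>i\<in>T. g i * p i x)^2)"
      unfolding sq_combo by simp
    finally show "Qf n (\<lambda>x y. a x y - (if x = y then \<mu> else 0)) h
            = (\<Sum>x<n. (\<Sum>i\<in>T. g i * p i x)^2)" .
  }
qed

lemma minmax_le:
  assumes T: "T \<subseteq> {..<n}" and le: "\<forall>i\<in>T. d i \<le> \<mu>"
    and L: "length L < card T"
  shows "\<exists>h. (\<exists>x<n. h x \<noteq> 0) \<and> (\<forall>l\<in>set L. (\<Sum>x<n. l x * h x) = 0)
     \<and> Qf n (\<lambda>x y. a x y - (if x = y then \<mu> else 0)) h \<le> 0"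
proof -
  have fT: "finite T" using T finite_subset by blast
  define L' where "L' = map (\<lambda>l i. (\<Sum>x<n. l x * p i x)) L"
  obtain \<beta> where b: "\<exists>i\<in>T. \<beta> i \<noteq> 0" "\<forall>l\<in>set L'. (\<Sum>i\<in>T. l i * \<beta> i) = 0"
    using homog[OF fT, of L'] L unfolding L'_def by auto
  define h where "h = (\<lambda>x. (\<Sum>i\<in>T. \<beta> i * p i x))"
  have "\<exists>x<n. h x \<noteq> 0" using combo_nonzero[OF T b(1)] unfolding h_def .
  moreover have "\<forall>l\<in>set L. (\<Sum>x<n. l x * h x) = 0"
  proof
    fix l assume "l \<in> set L"
    then have "(\<Sum>i\<in>T. (\<Sum>x<n. l x * p i x) * \<beta> i) = 0" using b(2) unfolding L'_def by auto
    moreover have "(\<Sum>x<n. l x * h x) = (\<Sum>i\<in>T. (\<Sum>x<n. l x * p i x) * \<beta> i)"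
    proof -
      have "(\<Sum>x<n. l x * h x) = (\<Sum>x<n. \<Sum>i\<in>T. l x * p i x * \<beta> i)"
        unfolding h_def by (simp add: sum_distrib_left mult_ac)
      also have "\<dots> = (\<Sum>i\<in>T. \<Sum>x<n. l x * p i x * \<beta> i)" by (rule sum.swap)
      also have "\<dots> = (\<Sum>i\<in>T. (\<Sum>x<n. l x * p i x) * \<beta> i)" by (simp add: sum_distrib_right)
      finally show ?thesis .
    qed
    ultimately show "(\<Sum>x<n. l x * h x) = 0" by simp
  qed
  moreover have "Qf n (\<lambda>x y. a x y - (if x = y then \<mu> else 0)) h \<le> 0"
    unfolding h_def Q_sign(1)[OF T le] by (simp add: sum_nonneg)
  ultimately show ?thesis by blast
qed

lemma minmax_gt:
  assumes T: "T \<subseteq> {..<n}" and gt: "\<forall>i\<in>T. d i > \<mu>"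
    and L: "length L < card T"
  shows "\<exists>h. (\<exists>x<n. h x \<noteq> 0) \<and> (\<forall>l\<in>set L. (\<Sum>x<n. l x * h x) = 0)
     \<and> Qf n (\<lambda>x y. a x y - (if x = y then \<mu> else 0)) h > 0"
proof -
  have fT: "finite T" using T finite_subset by blast
  define L' where "L' = map (\<lambda>l i. (\<Sum>x<n. l x * p i x)) L"
  obtain \<beta> where b: "\<exists>i\<in>T. \<beta> i \<noteq> 0" "\<forall>l\<in>set L'. (\<Sum>i\<in>T. l i * \<beta> i) = 0"
    using homog[OF fT, of L'] L unfolding L'_def by auto
  define h where "h = (\<lambda>x. (\<Sum>i\<in>T. \<beta> i * p i x))"
  have "\<exists>x<n. h x \<noteq> 0" using combo_nonzero[OF T b(1)] unfolding h_def .
  moreover have "\<forall>l\<in>set L. (\<Sum>x<n. l x * h x) = 0"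
  proof
    fix l assume "l \<in> set L"
    then have "(\<Sum>i\<in>T. (\<Sum>x<n. l x * p i x) * \<beta> i) = 0" using b(2) unfolding L'_def by auto
    moreover have "(\<Sum>x<n. l x * h x) = (\<Sum>i\<in>T. (\<Sum>x<n. l x * p i x) * \<beta> i)"
    proof -
      have "(\<Sum>x<n. l x * h x) = (\<Sum>x<n. \<Sum>i\<in>T. l x * p i x * \<beta> i)"
        unfolding h_def by (simp add: sum_distrib_left mult_ac)
      also have "\<dots> = (\<Sum>i\<in>T. \<Sum>x<n. l x * p i x * \<beta> i)" by (rule sum.swap)
      also have "\<dots> = (\<Sum>i\<in>T. (\<Sum>x<n. l x * p i x) * \<beta> i)" by (simp add: sum_distrib_right)
      finally show ?thesis .
    qed
    ultimately show "(\<Sum>x<n. l x * h x) = 0" by simp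
  qed
  moreover have "Qf n (\<lambda>x y. a x y - (if x = y then \<mu> else 0)) h > 0"
  proof -
    define g where "g = (\<lambda>i. \<beta> i * sqrt \<bar>d i - \<mu>\<bar>)"
    have ge: "\<forall>i\<in>T. d i \<ge> \<mu>" using gt by force
    have "\<exists>i\<in>T. g i \<noteq> 0" using b(1) gt unfolding g_def by force
    from combo_nonzero[OF T this] obtain x where x: "x < n" "(\<Sum>i\<in>T. g i * p i x) \<noteq> 0" by blast
    have "0 < (\<Sum>i\<in>T. g i * p i x)^2" using x by simp
    also have "\<dots> \<le> (\<Sum>x<n. (\<Sum>i\<in>T. g i * p i x)^2)"
      by (rule member_le_sum) (use x in auto)
    finally show ?thesis unfolding h_def Q_sign(2)[OF T ge] g_def .
  qed
  ultimately show ?thesis by blast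
qed

end


definition adjV :: "nat set \<Rightarrow> (nat \<Rightarrow> nat \<Rightarrow> real) \<Rightarrow> nat \<Rightarrow> nat \<Rightarrow> bool" where
  "adjV V a x y \<longleftrightarrow> x \<in> V \<and> y \<in> V \<and> x \<noteq> y \<and> a x y \<noteq> 0"

definition forest :: "nat set \<Rightarrow> (nat \<Rightarrow> nat \<Rightarrow> real) \<Rightarrow> bool" where
  "forest V a \<longleftrightarrow> \<not> (\<exists>cs. length cs \<ge> 3 \<and> distinct cs \<and>
      (\<forall>j < length cs - 1. adjV V a (cs ! j) (cs ! Suc j)) \<and> adjV V a (last cs) (hd cs))"

definition Rel :: "nat set \<Rightarrow> (nat \<Rightarrow> nat \<Rightarrow> real) \<Rightarrow> (nat \<Rightarrow> real) \<Rightarrow> (nat \<times> nat) set" where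
  "Rel V a f = {(x,y). adjV V a x y \<and> f x * a x y * f y < 0}"

definition supp :: "nat set \<Rightarrow> (nat \<Rightarrow> real) \<Rightarrow> nat set" where
  "supp V f = {x\<in>V. f x \<noteq> 0}"

definition nrel :: "nat set \<Rightarrow> (nat \<Rightarrow> nat \<Rightarrow> real) \<Rightarrow> (nat \<Rightarrow> real) \<Rightarrow> (nat \<times> nat) set" where
  "nrel V a f = {(x,y). x \<in> supp V f \<and> y \<in> supp V f \<and> (x,y) \<in> (Rel V a f)\<^sup>*}"

definition SC :: "nat set \<Rightarrow> (nat \<Rightarrow> nat \<Rightarrow> real) \<Rightarrow> (nat \<Rightarrow> real) \<Rightarrow> nat" where
  "SC V a f = card (supp V f // nrel V a f)"

definition Fz :: "nat set \<Rightarrow> (nat \<Rightarrow> nat \<Rightarrow> real) \<Rightarrow> (nat \<Rightarrow> real) \<Rightarrow> nat set" where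
  "Fz V a f = {x\<in>V. f x = 0 \<and> (\<forall>y. adjV V a x y \<longrightarrow> f y = 0)}"

definition QV :: "nat set \<Rightarrow> (nat \<Rightarrow> nat \<Rightarrow> real) \<Rightarrow> (nat \<Rightarrow> real) \<Rightarrow> real" where
  "QV V a h = (\<Sum>x\<in>V. \<Sum>y\<in>V. h x * a x y * h y)"

definition symV :: "nat set \<Rightarrow> (nat \<Rightarrow> nat \<Rightarrow> real) \<Rightarrow> bool" where
  "symV V a \<longleftrightarrow> (\<forall>x\<in>V. \<forall>y\<in>V. a x y = a y x)"

lemma adjV_sym: "symV V a \<Longrightarrow> adjV V a x y \<Longrightarrow> adjV V a y x"
  unfolding symV_def adjV_def by auto

lemma Rel_sym: "symV V a \<Longrightarrow> sym (Rel V a f)"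
  unfolding sym_def Rel_def symV_def adjV_def by (auto simp: mult_ac)

lemma Rel_supp: "(x,y) \<in> Rel V a f \<Longrightarrow> x \<in> supp V f \<and> y \<in> supp V f"
  unfolding Rel_def supp_def adjV_def by auto

lemma nrel_equiv: "symV V a \<Longrightarrow> equiv (supp V f) (nrel V a f)"
proof -
  assume s: "symV V a"
  have sy: "sym ((Rel V a f)\<^sup>*)" by (rule sym_rtrancl[OF Rel_sym[OF s]])
  show ?thesis unfolding equiv_def refl_on_def sym_def trans_def nrel_def
    using sy unfolding sym_def by (auto intro: rtrancl_trans)
qed

lemma quotient_image: "A // r = (\<lambda>x. r `` {x}) ` A"
  unfolding quotient_def by auto

lemma card_image_eqrel:
  assumes "\<And>x y. x \<in> A \<Longrightarrow> y \<in> A \<Longrightarrow> F x = F y \<longleftrightarrow> G x = G y"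
  shows "card (F ` A) = card (G ` A)"
proof -
  define \<phi> where "\<phi> c = G (SOME x. x \<in> A \<and> F x = c)" for c
  have phi: "\<phi> (F x) = G x" if x: "x \<in> A" for x
  proof -
    have "\<exists>y. y \<in> A \<and> F y = F x" using x by blast
    then have "(SOME y. y \<in> A \<and> F y = F x) \<in> A \<and> F (SOME y. y \<in> A \<and> F y = F x) = F x"
      by (rule someI_ex)
    then show ?thesis unfolding \<phi>_def using assms x by blast
  qed
  have "inj_on \<phi> (F ` A)"
  proof (rule inj_onI)
    fix c c' assume "c \<in> F ` A" "c' \<in> F ` A" "\<phi> c = \<phi> c'"
    then obtain x y where "x \<in> A" "y \<in> A" "c = F x" "c' = F y" "G x = G y" using phi by auto
    then show "c = c'" using assms by auto
  qed
  then have "card (\<phi> ` F ` A) = card (F ` A)" by (rule card_image)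
  moreover have "\<phi> ` F ` A = G ` A"
  proof -
    have "\<phi> ` F ` A = (\<lambda>x. \<phi> (F x)) ` A" by (simp add: image_image)
    also have "\<dots> = G ` A" using phi by (simp cong: image_cong)
    finally show ?thesis .
  qed
  ultimately show ?thesis by simp
qed

lemma card_quot_le:
  assumes eA: "equiv A r" and eB: "equiv B r'" and AB: "A \<subseteq> B" and fB: "finite B"
    and agree: "\<And>x y. x \<in> A \<Longrightarrow> y \<in> A \<Longrightarrow> (x,y) \<in> r \<longleftrightarrow> (x,y) \<in> r'"
  shows "card (A // r) \<le> card (B // r')"
    and "v \<in> B \<Longrightarrow> (\<forall>x\<in>A. (x,v) \<notin> r') \<Longrightarrow> card (A // r) + 1 \<le> card (B // r')"
proof -
  have c1: "card (A // r) = card ((\<lambda>x. r' `` {x}) ` A)"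
    unfolding quotient_image
  proof (rule card_image_eqrel)
    fix x y assume x: "x \<in> A" and y: "y \<in> A"
    have yB: "y \<in> B" using y AB by auto
    have "r `` {x} = r `` {y} \<longleftrightarrow> (x,y) \<in> r"
      using equiv_class_eq[OF eA] eq_equiv_class[OF _ eA y] by blast
    also have "\<dots> \<longleftrightarrow> (x,y) \<in> r'" using agree x y by simp
    also have "\<dots> \<longleftrightarrow> r' `` {x} = r' `` {y}"
      using equiv_class_eq[OF eB] eq_equiv_class[OF _ eB yB] by blast
    finally show "r `` {x} = r `` {y} \<longleftrightarrow> r' `` {x} = r' `` {y}" .
  qed
  have sub: "(\<lambda>x. r' `` {x}) ` A \<subseteq> B // r'" using AB unfolding quotient_image by auto
  have fin: "finite (B // r')" using fB eB by (simp add: equiv_def refl_on_def finite_quotient)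
  show "card (A // r) \<le> card (B // r')" unfolding c1 by (rule card_mono[OF fin sub])
  assume v: "v \<in> B" and nv: "\<forall>x\<in>A. (x,v) \<notin> r'"
  have nin: "r' `` {v} \<notin> (\<lambda>x. r' `` {x}) ` A"
  proof
    assume "r' `` {v} \<in> (\<lambda>x. r' `` {x}) ` A"
    then obtain x where x: "x \<in> A" "r' `` {v} = r' `` {x}" by auto
    then have "(v,x) \<in> r'" using eq_equiv_class[OF _ eB] AB by auto
    then have "(x,v) \<in> r'" using eB unfolding equiv_def sym_def by blast
    with nv x show False by auto
  qed
  have vin: "r' `` {v} \<in> B // r'" using v unfolding quotient_image by auto
  have "(\<lambda>x. r' `` {x}) ` A \<subseteq> (B // r') - {r' `` {v}}" using sub nin by auto
  then have "card ((\<lambda>x. r' `` {x}) ` A) \<le> card ((B // r') - {r' `` {v}})"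
    using fin by (intro card_mono) auto
  also have "\<dots> = card (B // r') - 1" using vin fin by simp
  finally show "card (A // r) + 1 \<le> card (B // r')"
    unfolding c1 using vin fin by (metis card_0_eq empty_iff le_diff_conv2 less_one not_le)
qed

lemma offdiag_adjV:
  assumes "U \<subseteq> V" and "\<And>x y. x \<noteq> y \<Longrightarrow> a' x y = a x y"
  shows "adjV U a' x y \<longleftrightarrow> adjV V a x y \<and> x \<in> U \<and> y \<in> U"
  using assms unfolding adjV_def by auto

lemma offdiag_Rel:
  assumes "U \<subseteq> V" and "\<And>x y. x \<noteq> y \<Longrightarrow> a' x y = a x y"
  shows "Rel U a' f = Rel V a f \<inter> (U \<times> U)"
  using assms(1) by (auto simp: Rel_def adjV_def assms(2))

lemma symV_mono:
  assumes "U \<subseteq> V" and "\<And>x y. x \<noteq> y \<Longrightarrow> a' x y = a x y" and "symV V a"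
  shows "symV U a'"
  unfolding symV_def
proof (intro ballI)
  fix x y assume xy: "x \<in> U" "y \<in> U"
  then have "x \<in> V" "y \<in> V" using assms(1) by auto
  then show "a' x y = a' y x" using assms(2,3) unfolding symV_def
    by (cases "x = y") auto
qed

lemma forest_mono:
  assumes "U \<subseteq> V" and "\<And>x y. x \<noteq> y \<Longrightarrow> a' x y = a x y" and "forest V a"
  shows "forest U a'"
  unfolding forest_def
proof
  assume "\<exists>cs. length cs \<ge> 3 \<and> distinct cs \<and>
      (\<forall>j < length cs - 1. adjV U a' (cs ! j) (cs ! Suc j)) \<and> adjV U a' (last cs) (hd cs)"
  then obtain cs where cs: "length cs \<ge> 3" "distinct cs"
      "\<forall>j < length cs - 1. adjV U a' (cs ! j) (cs ! Suc j)" "adjV U a' (last cs) (hd cs)" by blast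
  have "\<forall>j < length cs - 1. adjV V a (cs ! j) (cs ! Suc j)" "adjV V a (last cs) (hd cs)"
    using cs(3,4) offdiag_adjV[OF assms(1,2)] by auto
  with cs(1,2) assms(3) show False unfolding forest_def by blast
qed

lemma SC_le:
  assumes UV: "U \<subseteq> V" and od: "\<And>x y. x \<noteq> y \<Longrightarrow> a' x y = a x y" and s: "symV V a"
    and fV: "finite V"
    and path: "\<And>x y. x \<in> U \<Longrightarrow> y \<in> U \<Longrightarrow> (x,y) \<in> (Rel V a f)\<^sup>* \<Longrightarrow> (x,y) \<in> (Rel U a' f)\<^sup>*"
  shows "SC U a' f \<le> SC V a f"
    and "v \<in> supp V f \<Longrightarrow> v \<notin> U \<Longrightarrow> (\<forall>y. (v,y) \<notin> Rel V a f) \<Longrightarrow> SC U a' f + 1 \<le> SC V a f"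
proof -
  have sU: "symV U a'" by (rule symV_mono[OF UV od s])
  have eA: "equiv (supp U f) (nrel U a' f)" by (rule nrel_equiv[OF sU])
  have eB: "equiv (supp V f) (nrel V a f)" by (rule nrel_equiv[OF s])
  have AB: "supp U f \<subseteq> supp V f" using UV unfolding supp_def by auto
  have fB: "finite (supp V f)" using fV unfolding supp_def by auto
  have RUV: "(Rel U a' f)\<^sup>* \<subseteq> (Rel V a f)\<^sup>*"
    using offdiag_Rel[OF UV od] by (intro rtrancl_mono) auto
  have agree: "(x,y) \<in> nrel U a' f \<longleftrightarrow> (x,y) \<in> nrel V a f" if "x \<in> supp U f" "y \<in> supp U f" for x y
    using that AB path RUV unfolding nrel_def supp_def by auto
  show "SC U a' f \<le> SC V a f" unfolding SC_def by (rule card_quot_le(1)[OF eA eB AB fB agree])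
  assume v: "v \<in> supp V f" and vU: "v \<notin> U" and nv: "\<forall>y. (v,y) \<notin> Rel V a f"
  have "\<forall>x\<in>supp U f. (x,v) \<notin> nrel V a f"
  proof (intro ballI notI)
    fix x assume x: "x \<in> supp U f" and xv: "(x,v) \<in> nrel V a f"
    then have "(v,x) \<in> (Rel V a f)\<^sup>*" using eB unfolding equiv_def sym_def nrel_def by blast
    then have "v = x" using nv by (cases rule: converse_rtranclE) auto
    then show False using x vU unfolding supp_def by auto
  qed
  then show "SC U a' f + 1 \<le> SC V a f" unfolding SC_def
    using card_quot_le(2)[OF eA eB AB fB, of v] agree v by blast
qed

lemma leaf_path:
  assumes sub: "Rel V a f \<subseteq> Rel U a' f \<union> {(v,w),(w,v)}" and vU: "v \<notin> U"
    and RU: "Rel U a' f \<subseteq> U \<times> U"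
    and x: "x \<in> U" and xz: "(x,z) \<in> (Rel V a f)\<^sup>*"
  shows "(z \<noteq> v \<longrightarrow> (x,z) \<in> (Rel U a' f)\<^sup>*) \<and> (z = v \<longrightarrow> (x,w) \<in> (Rel U a' f)\<^sup>*)"
  using xz
proof (induction rule: rtrancl_induct)
  case base
  then show ?case using x vU by auto
next
  case (step y z)
  from step.hyps(2) sub have "(y,z) \<in> Rel U a' f \<or> (y,z) = (v,w) \<or> (y,z) = (w,v)" by auto
  then show ?case
  proof (elim disjE)
    assume yz: "(y,z) \<in> Rel U a' f"
    then have "y \<noteq> v" "z \<noteq> v" using RU vU by auto
    then show ?case using step.IH yz by (auto intro: rtrancl_into_rtrancl)
  next
    assume yz: "(y,z) = (v,w)"
    then have "w \<noteq> v" using step.hyps(2) unfolding Rel_def adjV_def by auto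
    then show ?case using step.IH yz by auto
  next
    assume yz: "(y,z) = (w,v)"
    then have "w \<noteq> v" using step.hyps(2) unfolding Rel_def adjV_def by auto
    then show ?case using step.IH yz by auto
  qed
qed

lemma Fz_sub:
  assumes UV: "U \<subseteq> V" and od: "\<And>x y. x \<noteq> y \<Longrightarrow> a' x y = a x y"
    and border: "\<And>x y. x \<in> U \<Longrightarrow> y \<in> V \<Longrightarrow> y \<notin> U \<Longrightarrow> adjV V a x y \<Longrightarrow> f x = 0 \<Longrightarrow> f y = 0"
  shows "Fz U a' f \<subseteq> Fz V a f - (V - U)"
proof
  fix x assume x: "x \<in> Fz U a' f"
  then have xU: "x \<in> U" and fx: "f x = 0" and nb: "\<And>y. adjV U a' x y \<Longrightarrow> f y = 0"
    unfolding Fz_def by auto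
  have "f y = 0" if "adjV V a x y" for y
  proof (cases "y \<in> U")
    case True
    then show ?thesis using nb that xU offdiag_adjV[OF UV od] by auto
  next
    case False
    then show ?thesis using border[OF xU _ False that fx] that unfolding adjV_def by auto
  qed
  then show "x \<in> Fz V a f - (V - U)" using xU UV fx unfolding Fz_def by auto
qed


lemma leaf_exists:
  assumes fin: "finite V" and ne: "V \<noteq> {}" and fo: "forest V a"
  shows "\<exists>v\<in>V. \<forall>y y'. adjV V a v y \<longrightarrow> adjV V a v y' \<longrightarrow> y = y'"
proof -
  define P where "P = {ps. set ps \<subseteq> V \<and> distinct ps \<and> ps \<noteq> [] \<and>
     (\<forall>j<length ps - 1. adjV V a (ps!j) (ps!Suc j))}"
  have finP: "finite P"
    by (rule finite_subset[OF _ finite_subset_distinct[OF fin]]) (auto simp: P_def)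
  obtain v0 where v0: "v0 \<in> V" using ne by auto
  have "[v0] \<in> P" using v0 unfolding P_def by auto
  then have neP: "length ` P \<noteq> {}" by auto
  define m where "m = Max (length ` P)"
  have "m \<in> length ` P" unfolding m_def using finP neP by (intro Max_in) auto
  then obtain ps where ps: "ps \<in> P" "length ps = m" by auto
  have maxl: "\<And>qs. qs \<in> P \<Longrightarrow> length qs \<le> length ps"
    using ps finP unfolding m_def by (auto intro: Max_ge)
  have psV: "set ps \<subseteq> V" and dps: "distinct ps" and psne: "ps \<noteq> []"
    and psadj: "\<And>j. j < length ps - 1 \<Longrightarrow> adjV V a (ps!j) (ps!Suc j)"
    using ps(1) unfolding P_def by auto
  define v where "v = last ps"
  have vV: "v \<in> V" using psV psne unfolding v_def by auto
  have vlast: "v = ps ! (length ps - 1)" unfolding v_def using psne by (simp add: last_conv_nth)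
  have nb_in: "z \<in> set ps" if z: "adjV V a v z" for z
  proof (rule ccontr)
    assume zn: "z \<notin> set ps"
    have "ps @ [z] \<in> P"
      unfolding P_def
    proof (intro CollectI conjI allI impI)
      show "set (ps @ [z]) \<subseteq> V" using psV z unfolding adjV_def by auto
      show "distinct (ps @ [z])" using dps zn by auto
      show "ps @ [z] \<noteq> []" by simp
      fix j assume j: "j < length (ps @ [z]) - 1"
      show "adjV V a ((ps @ [z]) ! j) ((ps @ [z]) ! Suc j)"
      proof (cases "j < length ps - 1")
        case True
        then have "Suc j < length ps" by simp
        then show ?thesis using psadj[OF True] by (simp add: nth_append)
      next
        case False
        then have "j = length ps - 1" using j by simp
        then show ?thesis using z psne vlast by (simp add: nth_append)
      qed
    qed
    then show False using maxl by fastforce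
  qed
  have nb_pred: "z = ps ! (length ps - 2)" if z: "adjV V a v z" for z
  proof -
    obtain i where i: "i < length ps" "z = ps ! i" using nb_in[OF z] by (auto simp: in_set_conv_nth)
    have "z \<noteq> v" using z unfolding adjV_def by auto
    then have i1: "i \<noteq> length ps - 1" using i vlast by auto
    have "\<not> i + 3 \<le> length ps"
    proof
      assume i3: "i + 3 \<le> length ps"
      define cs where "cs = drop i ps"
      have "length cs \<ge> 3" using i3 unfolding cs_def by simp
      moreover have "distinct cs" using dps unfolding cs_def by simp
      moreover have "\<forall>j < length cs - 1. adjV V a (cs ! j) (cs ! Suc j)"
      proof (intro allI impI)
        fix j assume "j < length cs - 1"
        then have "i + j < length ps - 1" unfolding cs_def by simp
        then show "adjV V a (cs ! j) (cs ! Suc j)" using psadj unfolding cs_def using i by simp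
      qed
      moreover have "last cs = v" unfolding cs_def v_def using i by simp
      moreover have "hd cs = z" unfolding cs_def using i by (simp add: hd_drop_conv_nth)
      ultimately show False using fo z unfolding forest_def by blast
    qed
    then have "i = length ps - 2" using i i1 by linarith
    then show ?thesis using i by simp
  qed
  show ?thesis using vV nb_pred by blast
qed


lemma QV_remove:
  assumes fin: "finite V" and v: "v \<in> V" and s: "symV V a"
  shows "QV V a h = QV (V - {v}) a h + 2 * h v * (\<Sum>y\<in>V - {v}. a v y * h y) + a v v * h v * h v"
proof -
  let ?V' = "V - {v}"
  have sp: "\<And>g. (\<Sum>x\<in>V. g x) = g v + (\<Sum>x\<in>?V'. g x)" using fin v by (simp add: sum.remove)
  have "QV V a h = (\<Sum>y\<in>V. h v * a v y * h y) + (\<Sum>x\<in>?V'. \<Sum>y\<in>V. h x * a x y * h y)"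
    unfolding QV_def by (rule sp)
  also have "(\<Sum>y\<in>V. h v * a v y * h y) = h v * a v v * h v + (\<Sum>y\<in>?V'. h v * a v y * h y)"
    by (rule sp)
  also have "(\<Sum>x\<in>?V'. \<Sum>y\<in>V. h x * a x y * h y) = (\<Sum>x\<in>?V'. h x * a x v * h v + (\<Sum>y\<in>?V'. h x * a x y * h y))"
    by (intro sum.cong refl sp)
  also have "\<dots> = (\<Sum>x\<in>?V'. h x * a x v * h v) + QV ?V' a h"
    unfolding QV_def by (simp add: sum.distrib)
  also have "(\<Sum>x\<in>?V'. h x * a x v * h v) = (\<Sum>x\<in>?V'. h v * a v x * h x)"
    using s v unfolding symV_def by (intro sum.cong) (auto simp: mult_ac)
  finally show ?thesis
    by (simp add: sum_distrib_left mult_ac)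
qed

lemma QV_diag:
  assumes fin: "finite V" and w: "w \<in> V"
  shows "QV V (\<lambda>x y. a x y + (if x = w \<and> y = w then \<delta> else 0)) h = QV V a h + \<delta> * h w * h w"
proof -
  have "QV V (\<lambda>x y. a x y + (if x = w \<and> y = w then \<delta> else 0)) h
      = QV V a h + (\<Sum>x\<in>V. \<Sum>y\<in>V. h x * (if x = w \<and> y = w then \<delta> else 0) * h y)"
    unfolding QV_def by (simp add: algebra_simps sum.distrib)
  also have "(\<Sum>x\<in>V. \<Sum>y\<in>V. h x * (if x = w \<and> y = w then \<delta> else 0) * h y)
      = (\<Sum>x\<in>V. if x = w then h w * \<delta> * h w else 0)"
  proof (intro sum.cong refl)
    fix x assume "x \<in> V"
    have "(\<Sum>y\<in>V. h x * (if x = w \<and> y = w then \<delta> else 0) * h y)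
        = (\<Sum>y\<in>V. if y = w then (if x = w then h w * \<delta> * h w else 0) else 0)"
      by (intro sum.cong) auto
    also have "\<dots> = (if x = w then h w * \<delta> * h w else 0)" using fin w by (simp add: sum.delta')
    finally show "(\<Sum>y\<in>V. h x * (if x = w \<and> y = w then \<delta> else 0) * h y)
        = (if x = w then h w * \<delta> * h w else 0)" .
  qed
  also have "\<dots> = \<delta> * h w * h w" using fin w by (simp add: sum.delta' mult_ac)
  finally show ?thesis .
qed

lemma QV_zero:
  assumes "\<forall>x\<in>V. h x = 0"
  shows "QV V a h = 0"
  using assms unfolding QV_def by simp

lemma sum_lift:
  fixes l h :: "nat \<Rightarrow> real"
  assumes fin: "finite V" and UV: "U \<subseteq> V"
  shows "(\<Sum>x\<in>V. (if x \<in> U then l x else 0) * h x) = (\<Sum>x\<in>U. l x * h x)"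
proof -
  have "(\<Sum>x\<in>V. (if x \<in> U then l x else 0) * h x) = (\<Sum>x\<in>V. (if x \<in> U then l x * h x else 0))"
    by (intro sum.cong) auto
  also have "\<dots> = sum (\<lambda>x. l x * h x) (V \<inter> U)" using fin by (simp add: sum.inter_restrict)
  also have "V \<inter> U = U" using UV by auto
  finally show ?thesis .
qed

definition good :: "nat set \<Rightarrow> (nat \<Rightarrow> nat \<Rightarrow> real) \<Rightarrow> nat \<Rightarrow> bool" where
  "good V a k \<longleftrightarrow> (\<exists>L. length L \<le> k \<and> (\<forall>h. (\<forall>l\<in>set L. (\<Sum>x\<in>V. l x * h x) = 0) \<longrightarrow>
      (\<exists>x\<in>V. h x \<noteq> 0) \<longrightarrow> QV V a h > 0))"

lemma good_mono: "good V a k \<Longrightarrow> k \<le> k' \<Longrightarrow> good V a k'"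
  unfolding good_def by (meson order_trans)

lemma good_empty: "good {} a k"
  unfolding good_def by (intro exI[of _ "[]"]) auto

lemma good_lift:
  assumes fin: "finite V" and UV: "U \<subseteq> V" and g: "good U a' k"
  obtains L where "length L \<le> k" "\<And>h. (\<forall>l\<in>set L. (\<Sum>x\<in>V. l x * h x) = 0) \<Longrightarrow>
      (\<exists>x\<in>U. h x \<noteq> 0) \<Longrightarrow> QV U a' h > 0"
proof -
  obtain L' where L': "length L' \<le> k" "\<And>h. (\<forall>l\<in>set L'. (\<Sum>x\<in>U. l x * h x) = 0) \<Longrightarrow>
      (\<exists>x\<in>U. h x \<noteq> 0) \<Longrightarrow> QV U a' h > 0" using g unfolding good_def by blast
  define L where "L = map (\<lambda>l x. if x \<in> U then l x else 0) L'"
  have "length L \<le> k" using L' unfolding L_def by simp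
  moreover have "QV U a' h > 0" if h: "\<forall>l\<in>set L. (\<Sum>x\<in>V. l x * h x) = 0" "\<exists>x\<in>U. h x \<noteq> 0" for h
  proof -
    have "\<forall>l\<in>set L'. (\<Sum>x\<in>U. l x * h x) = 0"
    proof
      fix l assume "l \<in> set L'"
      then have "(\<lambda>x. if x \<in> U then l x else 0) \<in> set L" unfolding L_def by auto
      then have "(\<Sum>x\<in>V. (if x \<in> U then l x else 0) * h x) = 0" using h(1) by auto
      then show "(\<Sum>x\<in>U. l x * h x) = 0" using sum_lift[OF fin UV] by simp
    qed
    then show ?thesis using L'(2) h(2) by blast
  qed
  ultimately show ?thesis using that by blast
qed

lemma case_iso:
  assumes fin: "finite V" and v: "v \<in> V" and s: "symV V a" and iso: "\<forall>y. \<not> adjV V a v y"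
    and g: "good (V - {v}) a k"
  shows "good V a (k + 1)"
proof -
  let ?V' = "V - {v}"
  obtain L where L: "length L \<le> k" "\<And>h. (\<forall>l\<in>set L. (\<Sum>x\<in>V. l x * h x) = 0) \<Longrightarrow>
      (\<exists>x\<in>?V'. h x \<noteq> 0) \<Longrightarrow> QV ?V' a h > 0"
    using good_lift[OF fin _ g] by blast
  define l0 where "l0 = (\<lambda>x. if x = v then (1::real) else 0)"
  have l0h: "(\<Sum>x\<in>V. l0 x * h x) = h v" for h
  proof -
    have "(\<Sum>x\<in>V. l0 x * h x) = (\<Sum>x\<in>V. if x = v then h v else 0)"
      unfolding l0_def by (intro sum.cong) auto
    also have "\<dots> = h v" using fin v by (simp add: sum.delta')
    finally show ?thesis .
  qed
  have av: "a v y = 0" if "y \<in> ?V'" for y using iso that v unfolding adjV_def by auto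
  show ?thesis unfolding good_def
  proof (intro exI[of _ "l0 # L"] conjI allI impI)
    show "length (l0 # L) \<le> k + 1" using L by simp
    fix h assume h: "\<forall>l\<in>set (l0 # L). (\<Sum>x\<in>V. l x * h x) = 0" and nz: "\<exists>x\<in>V. h x \<noteq> 0"
    have hv: "h v = 0" using h l0h by auto
    then have "\<exists>x\<in>?V'. h x \<noteq> 0" using nz by auto
    then have pos: "QV ?V' a h > 0" using L(2) h by auto
    have "QV V a h = QV ?V' a h" using QV_remove[OF fin v s, of h] hv by simp
    then show "QV V a h > 0" using pos by simp
  qed
qed

lemma case_leaf_nz:
  assumes fin: "finite V" and v: "v \<in> V" and w: "w \<in> V" and vw: "v \<noteq> w" and s: "symV V a"
    and avv: "a v v \<noteq> 0" and only: "\<And>y. y \<in> V \<Longrightarrow> y \<noteq> v \<Longrightarrow> y \<noteq> w \<Longrightarrow> a v y = 0"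
    and g: "good (V - {v}) (\<lambda>x y. a x y + (if x = w \<and> y = w then - (a v w * a v w / a v v) else 0)) k"
  shows "a v v > 0 \<Longrightarrow> good V a k" and "a v v < 0 \<Longrightarrow> good V a (k + 1)"
proof -
  let ?V' = "V - {v}"
  let ?a' = "\<lambda>x y. a x y + (if x = w \<and> y = w then - (a v w * a v w / a v v) else 0)"
  obtain L where L: "length L \<le> k" "\<And>h. (\<forall>l\<in>set L. (\<Sum>x\<in>V. l x * h x) = 0) \<Longrightarrow>
      (\<exists>x\<in>?V'. h x \<noteq> 0) \<Longrightarrow> QV ?V' ?a' h > 0"
    using good_lift[OF fin _ g] by blast
  have w': "w \<in> ?V'" using w vw by auto
  have fin': "finite ?V'" using fin by simp
  have rowv: "(\<Sum>y\<in>?V'. a v y * h y) = a v w * h w" for h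
  proof -
    have "(\<Sum>y\<in>?V'. a v y * h y) = (\<Sum>y\<in>?V'. if y = w then a v w * h w else 0)"
      using only by (intro sum.cong) auto
    also have "\<dots> = a v w * h w" using fin' w' by simp
    finally show ?thesis .
  qed
  have Qeq: "QV V a h = QV ?V' ?a' h + a v v * (h v + a v w * h w / a v v)^2" for h
  proof -
    have e1: "QV V a h = QV ?V' a h + 2 * h v * (a v w * h w) + a v v * h v * h v"
      using QV_remove[OF fin v s, of h] rowv by simp
    have e2: "QV ?V' ?a' h = QV ?V' a h + - (a v w * a v w / a v v) * h w * h w"
      by (rule QV_diag[OF fin' w'])
    have sq: "a v v * (h v + a v w * h w / a v v)^2 = a v v * h v * h v + 2 * h v * (a v w * h w) + a v w * a v w / a v v * h w * h w"
      using avv by (simp add: field_simps power2_eq_square)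
    show ?thesis unfolding e1 e2 sq by (simp add: algebra_simps)
  qed
  {
    assume pos: "a v v > 0"
    show "good V a k" unfolding good_def
    proof (intro exI[of _ L] conjI allI impI)
      show "length L \<le> k" by (rule L(1))
      fix h assume h: "\<forall>l\<in>set L. (\<Sum>x\<in>V. l x * h x) = 0" and nz: "\<exists>x\<in>V. h x \<noteq> 0"
      show "QV V a h > 0"
      proof (cases "\<exists>x\<in>?V'. h x \<noteq> 0")
        case True
        then have "QV ?V' ?a' h > 0" using L(2) h by blast
        moreover have "a v v * (h v + a v w * h w / a v v)^2 \<ge> 0" using pos by simp
        ultimately show ?thesis unfolding Qeq by linarith
      next
        case False
        then have hv: "h v \<noteq> 0" using nz by auto
        have "QV ?V' ?a' h = 0" using False by (intro QV_zero) auto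
        moreover have "h w = 0" using False w' by auto
        ultimately show ?thesis unfolding Qeq using pos hv by simp
      qed
    qed
  }
  {
    assume neg: "a v v < 0"
    define l0 where "l0 = (\<lambda>x. if x = v then 1 else if x = w then a v w / a v v else 0)"
    have l0h: "(\<Sum>x\<in>V. l0 x * h x) = h v + a v w / a v v * h w" for h
    proof -
      have "(\<Sum>x\<in>V. l0 x * h x) = l0 v * h v + (\<Sum>x\<in>?V'. l0 x * h x)" using fin v by (simp add: sum.remove)
      also have "(\<Sum>x\<in>?V'. l0 x * h x) = (\<Sum>x\<in>?V'. if x = w then a v w / a v v * h w else 0)"
        unfolding l0_def by (intro sum.cong) auto
      also have "\<dots> = a v w / a v v * h w" using fin' w' by simp
      finally show ?thesis unfolding l0_def by simp
    qed
    show "good V a (k + 1)" unfolding good_def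
    proof (intro exI[of _ "l0 # L"] conjI allI impI)
      show "length (l0 # L) \<le> k + 1" using L(1) by simp
      fix h assume h: "\<forall>l\<in>set (l0 # L). (\<Sum>x\<in>V. l x * h x) = 0" and nz: "\<exists>x\<in>V. h x \<noteq> 0"
      have c0: "h v + a v w / a v v * h w = 0" using h l0h by auto
      then have sq0: "(h v + a v w * h w / a v v) = 0" by simp
      have "\<exists>x\<in>?V'. h x \<noteq> 0"
      proof (rule ccontr)
        assume "\<not> (\<exists>x\<in>?V'. h x \<noteq> 0)"
        then have "h w = 0" "\<forall>x\<in>?V'. h x = 0" using w' by auto
        moreover then have "h v = 0" using c0 by simp
        ultimately show False using nz by auto
      qed
      then have "QV ?V' ?a' h > 0" using L(2) h by auto
      then show "QV V a h > 0" unfolding Qeq sq0 by simp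
    qed
  }
qed

lemma case_leaf_zero:
  assumes fin: "finite V" and v: "v \<in> V" and w: "w \<in> V" and vw: "v \<noteq> w" and s: "symV V a"
    and avv: "a v v = 0" and avw: "a v w \<noteq> 0"
    and only: "\<And>y. y \<in> V \<Longrightarrow> y \<noteq> v \<Longrightarrow> y \<noteq> w \<Longrightarrow> a v y = 0"
    and g: "good (V - {v} - {w}) a k"
  shows "good V a (k + 1)"
proof -
  let ?V1 = "V - {v}"
  let ?V2 = "V - {v} - {w}"
  obtain L where L: "length L \<le> k" "\<And>h. (\<forall>l\<in>set L. (\<Sum>x\<in>V. l x * h x) = 0) \<Longrightarrow>
      (\<exists>x\<in>?V2. h x \<noteq> 0) \<Longrightarrow> QV ?V2 a h > 0"
    using good_lift[OF fin _ g] by blast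
  have w1: "w \<in> ?V1" using w vw by auto
  have fin1: "finite ?V1" using fin by simp
  have fin2: "finite ?V2" using fin by simp
  have s1: "symV ?V1 a" using s unfolding symV_def by auto
  have rowv: "(\<Sum>y\<in>?V1. a v y * h y) = a v w * h w" for h
  proof -
    have "(\<Sum>y\<in>?V1. a v y * h y) = (\<Sum>y\<in>?V1. if y = w then a v w * h w else 0)"
      using only by (intro sum.cong) auto
    also have "\<dots> = a v w * h w" using fin1 w1 by simp
    finally show ?thesis .
  qed
  define t where "t h = 2 * a v w * h v + a w w * h w + 2 * (\<Sum>y\<in>?V2. a w y * h y)" for h
  have Qeq: "QV V a h = QV ?V2 a h + h w * t h" for h
  proof -
    have "QV V a h = QV ?V1 a h + 2 * h v * (a v w * h w)"
      using QV_remove[OF fin v s, of h] rowv avv by simp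
    moreover have "QV ?V1 a h = QV ?V2 a h + 2 * h w * (\<Sum>y\<in>?V2. a w y * h y) + a w w * h w * h w"
      using QV_remove[OF fin1 w1 s1, of h] by simp
    ultimately show ?thesis unfolding t_def by (simp add: algebra_simps)
  qed
  define l0 where "l0 = (\<lambda>x. if x = v then 2 * a v w else if x = w then a w w - 1 else 2 * a w x)"
  have l0h: "(\<Sum>x\<in>V. l0 x * h x) = t h - h w" for h
  proof -
    have "(\<Sum>x\<in>V. l0 x * h x) = l0 v * h v + (\<Sum>x\<in>?V1. l0 x * h x)" using fin v by (simp add: sum.remove)
    also have "(\<Sum>x\<in>?V1. l0 x * h x) = l0 w * h w + (\<Sum>x\<in>?V2. l0 x * h x)" using fin1 w1 by (simp add: sum.remove)
    also have "(\<Sum>x\<in>?V2. l0 x * h x) = (\<Sum>x\<in>?V2. 2 * (a w x * h x))"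
      unfolding l0_def by (intro sum.cong) auto
    finally show ?thesis unfolding t_def l0_def using vw by (simp add: sum_distrib_left algebra_simps)
  qed
  show ?thesis unfolding good_def
  proof (intro exI[of _ "l0 # L"] conjI allI impI)
    show "length (l0 # L) \<le> k + 1" using L(1) by simp
    fix h assume h: "\<forall>l\<in>set (l0 # L). (\<Sum>x\<in>V. l x * h x) = 0" and nz: "\<exists>x\<in>V. h x \<noteq> 0"
    have th: "t h = h w" using h l0h by auto
    show "QV V a h > 0"
    proof (cases "\<exists>x\<in>?V2. h x \<noteq> 0")
      case True
      then have "QV ?V2 a h > 0" using L(2) h by auto
      then show ?thesis unfolding Qeq th by (simp add: add_pos_nonneg)
    next
      case False
      then have z2: "\<forall>x\<in>?V2. h x = 0" by auto
      then have Q0: "QV ?V2 a h = 0" by (rule QV_zero)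
      show ?thesis
      proof (cases "h w = 0")
        case True
        have "(\<Sum>y\<in>?V2. a w y * h y) = 0" using z2 by simp
        then have "t h = 2 * a v w * h v" unfolding t_def using True by simp
        then have "h v = 0" using th True avw by simp
        then show ?thesis using nz z2 True by auto
      next
        case False
        then have "0 < h w * h w" by (metis not_real_square_gt_zero)
        then show ?thesis unfolding Qeq th Q0 by simp
      qed
    qed
  qed
qed


lemma card_minus_one:
  assumes "finite B" "A \<subseteq> B - {v}" "v \<in> B"
  shows "card A + 1 \<le> card B"
proof -
  have "card A \<le> card (B - {v})" using assms by (intro card_mono) auto
  also have "\<dots> = card B - 1" using assms by simp
  finally show ?thesis using assms by (metis card_0_eq empty_iff le_diff_conv2 less_one not_le)
qed

lemma lower_main:
  assumes "finite V" "symV V a" "forest V a" "\<forall>x\<in>V. (\<Sum>y\<in>V. a x y * f y) = 0"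
  shows "good V a (SC V a f + card (Fz V a f))"
  using assms
proof (induction "card V" arbitrary: V a rule: less_induct)
  case less
  note fin = less.prems(1) and s = less.prems(2) and fo = less.prems(3) and ker = less.prems(4)
  show ?case
  proof (cases "V = {}")
    case True
    then show ?thesis using good_empty by simp
  next
    case False
    obtain v where v: "v \<in> V" and leaf: "\<forall>y y'. adjV V a v y \<longrightarrow> adjV V a v y' \<longrightarrow> y = y'"
      using leaf_exists[OF fin False fo] by blast
    let ?V' = "V - {v}"
    have fin': "finite ?V'" using fin by simp
    have cardlt: "card ?V' < card V" using fin v by (rule card_Diff1_less)
    have finFz: "finite (Fz V a f)" using fin unfolding Fz_def by auto
    have V'V: "?V' \<subseteq> V" by auto
    show ?thesis
    proof (cases "\<exists>w. adjV V a v w")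
      case False
      have od: "\<And>x y. x \<noteq> y \<Longrightarrow> a x y = a x y" by simp
      have axv: "a x v = 0" if x: "x \<in> ?V'" for x
      proof -
        have "\<not> adjV V a v x" using False by blast
        then have "a v x = 0" using x v unfolding adjV_def by auto
        then show ?thesis using s x v unfolding symV_def by auto
      qed
      have ker': "\<forall>x\<in>?V'. (\<Sum>y\<in>?V'. a x y * f y) = 0"
      proof
        fix x assume x: "x \<in> ?V'"
        have "(\<Sum>y\<in>V. a x y * f y) = a x v * f v + (\<Sum>y\<in>?V'. a x y * f y)"
          using fin v by (simp add: sum.remove)
        then show "(\<Sum>y\<in>?V'. a x y * f y) = 0" using ker x axv[OF x] by simp
      qed
      have IH: "good ?V' a (SC ?V' a f + card (Fz ?V' a f))"
        by (rule less.hyps[OF cardlt fin' symV_mono[OF V'V od s] forest_mono[OF V'V od fo] ker'])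
      have g: "good V a (SC ?V' a f + card (Fz ?V' a f) + 1)"
        by (rule case_iso[OF fin v s _ IH]) (use False in blast)
      have noRel: "\<forall>y. (v,y) \<notin> Rel V a f" using False unfolding Rel_def by auto
      have RelV: "Rel V a f \<subseteq> Rel ?V' a f"
      proof
        fix p assume p: "p \<in> Rel V a f"
        obtain x y where xy: "p = (x,y)" by force
        have "x \<noteq> v" using noRel p xy by auto
        moreover have "y \<noteq> v" using p xy False adjV_sym[OF s] unfolding Rel_def by blast
        ultimately show "p \<in> Rel ?V' a f" using p xy offdiag_Rel[OF V'V od] unfolding Rel_def adjV_def by auto
      qed
      have path: "(x,y) \<in> (Rel ?V' a f)\<^sup>*" if "x \<in> ?V'" "y \<in> ?V'" "(x,y) \<in> (Rel V a f)\<^sup>*" for x y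
        using rtrancl_mono[OF RelV] that by auto
      have Fzs: "Fz ?V' a f \<subseteq> Fz V a f - (V - ?V')"
      proof (rule Fz_sub[OF V'V od])
        fix x y assume "x \<in> ?V'" "y \<in> V" "y \<notin> ?V'" "adjV V a x y" "f x = 0"
        then show "f y = 0" using False adjV_sym[OF s] by auto
      qed
      have count: "SC ?V' a f + card (Fz ?V' a f) + 1 \<le> SC V a f + card (Fz V a f)"
      proof (cases "f v = 0")
        case True
        have "SC ?V' a f \<le> SC V a f" by (rule SC_le(1)[OF V'V od s fin path])
        moreover have "v \<in> Fz V a f" using True v False unfolding Fz_def by auto
        then have "card (Fz ?V' a f) + 1 \<le> card (Fz V a f)"
          using Fzs finFz by (intro card_minus_one) (auto simp: Fz_def)
        ultimately show ?thesis by simp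
      next
        case True': False
        have "v \<in> supp V f" using True' v unfolding supp_def by auto
        then have "SC ?V' a f + 1 \<le> SC V a f" using SC_le(2)[OF V'V od s fin path] noRel by blast
        moreover have "card (Fz ?V' a f) \<le> card (Fz V a f)" using Fzs finFz by (intro card_mono) auto
        ultimately show ?thesis by simp
      qed
      show ?thesis by (rule good_mono[OF g count])
    next
      case True
      then obtain w where w: "adjV V a v w" by blast
      have wV: "w \<in> V" and vw: "v \<noteq> w" and avw: "a v w \<noteq> 0" using w unfolding adjV_def by auto
      have onlyadj: "\<And>y. adjV V a v y \<Longrightarrow> y = w" using leaf w by blast
      have only: "\<And>y. y \<in> V \<Longrightarrow> y \<noteq> v \<Longrightarrow> y \<noteq> w \<Longrightarrow> a v y = 0"
        using onlyadj v unfolding adjV_def by blast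
      have axv: "\<And>x. x \<in> V \<Longrightarrow> x \<noteq> v \<Longrightarrow> x \<noteq> w \<Longrightarrow> a x v = 0"
        using only s v unfolding symV_def by metis
      have adjv: "\<And>x. adjV V a x v \<Longrightarrow> x = w" using onlyadj adjV_sym[OF s] by blast
      have w': "w \<in> ?V'" using wV vw by auto
      have rowv: "(\<Sum>y\<in>V. a v y * f y) = a v v * f v + a v w * f w"
      proof -
        have "(\<Sum>y\<in>V. a v y * f y) = a v v * f v + (\<Sum>y\<in>?V'. a v y * f y)"
          using fin v by (simp add: sum.remove)
        also have "(\<Sum>y\<in>?V'. a v y * f y) = (\<Sum>y\<in>?V'. if y = w then a v w * f w else 0)"
          using only by (intro sum.cong) auto
        also have "\<dots> = a v w * f w" using fin' w' by simp
        finally show ?thesis .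
      qed
      have rv: "a v v * f v + a v w * f w = 0" using ker v rowv by simp
      have awv: "a w v = a v w" using s v wV unfolding symV_def by auto
      show ?thesis
      proof (cases "a v v = 0")
        case False
        define a' where "a' = (\<lambda>x y. a x y + (if x = w \<and> y = w then - (a v w * a v w / a v v) else 0))"
        have od: "\<And>x y. x \<noteq> y \<Longrightarrow> a' x y = a x y" unfolding a'_def by auto
        have fv: "f v = - (a v w * f w / a v v)" using rv False by (simp add: field_simps)
        have ker': "\<forall>x\<in>?V'. (\<Sum>y\<in>?V'. a' x y * f y) = 0"
        proof
          fix x assume x: "x \<in> ?V'"
          have base: "(\<Sum>y\<in>?V'. a x y * f y) = - (a x v * f v)"
          proof -
            have "(\<Sum>y\<in>V. a x y * f y) = a x v * f v + (\<Sum>y\<in>?V'. a x y * f y)"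
              using fin v by (simp add: sum.remove)
            then show ?thesis using ker x by simp
          qed
          have "(\<Sum>y\<in>?V'. a' x y * f y) = (\<Sum>y\<in>?V'. a x y * f y + (if x = w \<and> y = w then - (a v w * a v w / a v v) * f y else 0))"
            unfolding a'_def by (intro sum.cong) (auto simp: algebra_simps)
          also have "\<dots> = (\<Sum>y\<in>?V'. a x y * f y) + (\<Sum>y\<in>?V'. if y = w then (if x = w then - (a v w * a v w / a v v) * f w else 0) else 0)"
          proof -
            have "(\<Sum>y\<in>?V'. (if x = w \<and> y = w then - (a v w * a v w / a v v) * f y else 0))
                = (\<Sum>y\<in>?V'. if y = w then (if x = w then - (a v w * a v w / a v v) * f w else 0) else 0)"
              by (intro sum.cong) auto
            then show ?thesis by (simp add: sum.distrib)
          qed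
          also have "(\<Sum>y\<in>?V'. if y = w then (if x = w then - (a v w * a v w / a v v) * f w else 0) else 0)
              = (if x = w then - (a v w * a v w / a v v) * f w else 0)"
            using fin' w' by (simp add: sum.delta')
          finally have e: "(\<Sum>y\<in>?V'. a' x y * f y) = - (a x v * f v) + (if x = w then - (a v w * a v w / a v v) * f w else 0)"
            unfolding base .
          show "(\<Sum>y\<in>?V'. a' x y * f y) = 0"
          proof (cases "x = w")
            case True
            then show ?thesis unfolding e fv using awv False by (simp add: field_simps)
          next
            case False
            then show ?thesis unfolding e using axv x by simp
          qed
        qed
        have IH: "good ?V' a' (SC ?V' a' f + card (Fz ?V' a' f))"
          by (rule less.hyps[OF cardlt fin' symV_mono[OF V'V od s] forest_mono[OF V'V od fo] ker'])
        have RU: "Rel ?V' a' f \<subseteq> ?V' \<times> ?V'" unfolding Rel_def adjV_def by auto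
        have sub: "Rel V a f \<subseteq> Rel ?V' a' f \<union> {(v,w),(w,v)}"
        proof
          fix p assume p: "p \<in> Rel V a f"
          obtain x y where xy: "p = (x,y)" by force
          have adj: "adjV V a x y" using p xy unfolding Rel_def by auto
          show "p \<in> Rel ?V' a' f \<union> {(v,w),(w,v)}"
          proof (cases "x = v \<or> y = v")
            case True
            then show ?thesis using adj onlyadj adjv xy by auto
          next
            case False
            then show ?thesis using p xy offdiag_Rel[OF V'V od] unfolding Rel_def adjV_def by auto
          qed
        qed
        have path: "(x,y) \<in> (Rel ?V' a' f)\<^sup>*" if xy: "x \<in> ?V'" "y \<in> ?V'" "(x,y) \<in> (Rel V a f)\<^sup>*" for x y
          using leaf_path[OF sub _ RU xy(1) xy(3)] xy(2) by auto
        have Fzs: "Fz ?V' a' f \<subseteq> Fz V a f - (V - ?V')"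
        proof (rule Fz_sub[OF V'V od])
          fix x y assume "x \<in> ?V'" "y \<in> V" "y \<notin> ?V'" "adjV V a x y" "f x = 0"
          then show "f y = 0" using adjv fv by auto
        qed
        have SCle: "SC ?V' a' f \<le> SC V a f" by (rule SC_le(1)[OF V'V od s fin path])
        show ?thesis
        proof (cases "a v v > 0")
          case True
          have g: "good V a (SC ?V' a' f + card (Fz ?V' a' f))"
            using case_leaf_nz(1)[OF fin v wV vw s False only, of "SC ?V' a' f + card (Fz ?V' a' f)"] IH True
            unfolding a'_def by blast
          have "card (Fz ?V' a' f) \<le> card (Fz V a f)" using Fzs finFz by (intro card_mono) auto
          then show ?thesis using good_mono[OF g] SCle by simp
        next
          case False': False
          then have neg: "a v v < 0" using False by simp
          have g: "good V a (SC ?V' a' f + card (Fz ?V' a' f) + 1)"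
            using case_leaf_nz(2)[OF fin v wV vw s False only, of "SC ?V' a' f + card (Fz ?V' a' f)"] IH neg
            unfolding a'_def by blast
          have count: "SC ?V' a' f + card (Fz ?V' a' f) + 1 \<le> SC V a f + card (Fz V a f)"
          proof (cases "f w = 0")
            case True
            then have "f v = 0" using fv by simp
            then have "v \<in> Fz V a f" using True v onlyadj unfolding Fz_def by auto
            then have "card (Fz ?V' a' f) + 1 \<le> card (Fz V a f)"
              using Fzs finFz by (intro card_minus_one) (auto simp: Fz_def)
            then show ?thesis using SCle by simp
          next
            case fw: False
            have fvnz: "f v \<noteq> 0" using fv fw avw False by simp
            have prod: "f v * a v w * f w = - ((a v w * f w) * (a v w * f w)) / a v v"
              unfolding fv by (simp add: field_simps)
            have "a v w * f w \<noteq> 0" using avw fw by simp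
            then have "(a v w * f w) * (a v w * f w) > 0" by (metis not_real_square_gt_zero)
            then have "f v * a v w * f w > 0" unfolding prod using neg by (simp add: divide_pos_neg)
            then have noRel: "\<forall>y. (v,y) \<notin> Rel V a f" using onlyadj unfolding Rel_def by auto
            have "v \<in> supp V f" using fvnz v unfolding supp_def by auto
            then have "SC ?V' a' f + 1 \<le> SC V a f" using SC_le(2)[OF V'V od s fin path] noRel by blast
            moreover have "card (Fz ?V' a' f) \<le> card (Fz V a f)" using Fzs finFz by (intro card_mono) auto
            ultimately show ?thesis by simp
          qed
          show ?thesis by (rule good_mono[OF g count])
        qed
      next
        case True
        have fw: "f w = 0" using rv True avw by simp
        let ?V2 = "V - {v} - {w}"
        have fin2: "finite ?V2" using fin by simp
        have V2V: "?V2 \<subseteq> V" by auto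
        have cardlt2: "card ?V2 < card V"
        proof -
          have "card ?V2 \<le> card ?V'" by (rule card_mono[OF fin']) auto
          then show ?thesis using cardlt by simp
        qed
        have od: "\<And>x y. x \<noteq> y \<Longrightarrow> a x y = a x y" by simp
        have ker2: "\<forall>x\<in>?V2. (\<Sum>y\<in>?V2. a x y * f y) = 0"
        proof
          fix x assume x: "x \<in> ?V2"
          have "(\<Sum>y\<in>V. a x y * f y) = a x v * f v + (\<Sum>y\<in>?V'. a x y * f y)"
            using fin v by (simp add: sum.remove)
          also have "(\<Sum>y\<in>?V'. a x y * f y) = a x w * f w + (\<Sum>y\<in>?V2. a x y * f y)"
            using fin' w' by (simp add: sum.remove)
          finally show "(\<Sum>y\<in>?V2. a x y * f y) = 0" using ker x axv fw by simp
        qed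
        have IH: "good ?V2 a (SC ?V2 a f + card (Fz ?V2 a f))"
          by (rule less.hyps[OF cardlt2 fin2 symV_mono[OF V2V od s] forest_mono[OF V2V od fo] ker2])
        have g: "good V a (SC ?V2 a f + card (Fz ?V2 a f) + 1)"
          by (rule case_leaf_zero[OF fin v wV vw s True avw only IH])
        have noRelv: "\<forall>y. (v,y) \<notin> Rel V a f" using onlyadj fw unfolding Rel_def by auto
        have RelV: "Rel V a f \<subseteq> Rel ?V2 a f"
        proof
          fix p assume p: "p \<in> Rel V a f"
          obtain x y where xy: "p = (x,y)" by force
          have adj: "adjV V a x y" and nz: "f x \<noteq> 0" "f y \<noteq> 0"
            using p xy unfolding Rel_def by auto
          have "x \<noteq> v" using noRelv p xy by auto
          moreover have "y \<noteq> v" using adjv adj nz fw by auto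
          moreover have "x \<noteq> w" "y \<noteq> w" using nz fw by auto
          ultimately show "p \<in> Rel ?V2 a f" using p xy offdiag_Rel[OF V2V od] unfolding Rel_def adjV_def by auto
        qed
        have path: "(x,y) \<in> (Rel ?V2 a f)\<^sup>*" if "x \<in> ?V2" "y \<in> ?V2" "(x,y) \<in> (Rel V a f)\<^sup>*" for x y
          using rtrancl_mono[OF RelV] that by auto
        have Fzs: "Fz ?V2 a f \<subseteq> Fz V a f - (V - ?V2)"
        proof (rule Fz_sub[OF V2V od])
          fix x y assume "x \<in> ?V2" "y \<in> V" "y \<notin> ?V2" "adjV V a x y" "f x = 0"
          then show "f y = 0" using adjv fw by auto
        qed
        have count: "SC ?V2 a f + card (Fz ?V2 a f) + 1 \<le> SC V a f + card (Fz V a f)"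
        proof (cases "f v = 0")
          case True
          have "SC ?V2 a f \<le> SC V a f" by (rule SC_le(1)[OF V2V od s fin path])
          moreover have "v \<in> Fz V a f" using True v onlyadj fw unfolding Fz_def by auto
          then have "card (Fz ?V2 a f) + 1 \<le> card (Fz V a f)"
            using Fzs finFz by (intro card_minus_one) (auto simp: Fz_def)
          ultimately show ?thesis by simp
        next
          case False
          have "v \<in> supp V f" using False v unfolding supp_def by auto
          then have "SC ?V2 a f + 1 \<le> SC V a f" using SC_le(2)[OF V2V od s fin path] noRelv by blast
          moreover have "card (Fz ?V2 a f) \<le> card (Fz V a f)" using Fzs finFz by (intro card_mono) auto
          ultimately show ?thesis by simp
        qed
        show ?thesis by (rule good_mono[OF g count])
      qed
    qed
  qed
qed


lemma chain_rtrancl: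
  "ys \<noteq> [] \<Longrightarrow> (\<forall>j<length ys - 1. (ys!j, ys!Suc j) \<in> R) \<Longrightarrow> (hd ys, last ys) \<in> R\<^sup>*"
proof (induction ys)
  case Nil then show ?case by simp
next
  case (Cons y ys)
  show ?case
  proof (cases "ys = []")
    case True then show ?thesis by simp
  next
    case False
    have step: "(y, ys!0) \<in> R" using Cons.prems(2) False by (cases ys) auto
    have "\<forall>j<length ys - 1. (ys!j, ys!Suc j) \<in> R"
    proof (intro allI impI)
      fix j assume "j < length ys - 1"
      then have "Suc j < length (y # ys) - 1" by simp
      then show "(ys!j, ys!Suc j) \<in> R" using Cons.prems(2) by fastforce
    qed
    then have "(hd ys, last ys) \<in> R\<^sup>*" using Cons.IH False by blast
    then show ?thesis using step False by (simp add: hd_conv_nth converse_rtrancl_into_rtrancl)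
  qed
qed

lemma trancl_chain:
  assumes "(x,y) \<in> R\<^sup>+"
  shows "\<exists>ys. length ys \<ge> 2 \<and> (\<forall>j<length ys - 1. (ys!j, ys!Suc j) \<in> R) \<and> hd ys = x \<and> last ys = y"
  using assms
proof (induction rule: trancl_induct)
  case (base y)
  then show ?case by (intro exI[of _ "[x,y]"]) auto
next
  case (step y z)
  then obtain ys where ys: "length ys \<ge> 2" "\<forall>j<length ys - 1. (ys!j, ys!Suc j) \<in> R" "hd ys = x" "last ys = y"
    by blast
  have ne: "ys \<noteq> []" using ys(1) by auto
  have "\<forall>j<length (ys @ [z]) - 1. ((ys @ [z])!j, (ys @ [z])!Suc j) \<in> R"
  proof (intro allI impI)
    fix j assume j: "j < length (ys @ [z]) - 1"
    show "((ys @ [z])!j, (ys @ [z])!Suc j) \<in> R"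
    proof (cases "j < length ys - 1")
      case True
      then have "Suc j < length ys" by simp
      then show ?thesis using ys(2) True by (simp add: nth_append)
    next
      case False
      then have jj: "j = length ys - 1" using j by simp
      have "ys ! (length ys - 1) = y" using ys(4) ne by (simp add: last_conv_nth)
      then show ?thesis using jj ne step.hyps(2) by (simp add: nth_append)
    qed
  qed
  then show ?case using ys ne by (intro exI[of _ "ys @ [z]"]) auto
qed

lemma nodal_rel_eq:
  fixes A :: "real mat" and m :: "nat \<Rightarrow> nat \<Rightarrow> real"
  assumes A: "A \<in> carrier_mat n n"
    and H1: "\<And>x y. adj A x y \<longleftrightarrow> adjV {..<n} m x y"
    and H2: "\<And>x y. adj A x y \<Longrightarrow> (f $ x * s x y * f $ y > 0 \<longleftrightarrow> f $ x * m x y * f $ y < 0)"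
  shows "nodal_rel A s f = nrel {..<n} m (\<lambda>x. f $ x)"
proof -
  let ?R = "Rel {..<n} m (\<lambda>x. f $ x)"
  have sw: "S_walk A s f ys \<longleftrightarrow> length ys \<ge> 2 \<and> (\<forall>j<length ys - 1. (ys!j, ys!Suc j) \<in> ?R)" for ys
    unfolding S_walk_def is_walk_def Rel_def using H1 H2 by auto
  show ?thesis
  proof (rule subset_antisym; rule subsetI)
    fix p assume p: "p \<in> nodal_rel A s f"
    obtain x y where xy: "p = (x,y)" by force
    have b: "x < n" "y < n" "f $ x \<noteq> 0" "f $ y \<noteq> 0" using p xy A unfolding nodal_rel_def by auto
    have "x = y \<or> (\<exists>ys. S_walk A s f ys \<and> hd ys = x \<and> last ys = y)" using p xy unfolding nodal_rel_def by auto
    then have "(x,y) \<in> ?R\<^sup>*"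
    proof
      assume "\<exists>ys. S_walk A s f ys \<and> hd ys = x \<and> last ys = y"
      then obtain ys where "S_walk A s f ys" "hd ys = x" "last ys = y" by blast
      then show ?thesis using chain_rtrancl[of ys ?R] sw by fastforce
    qed simp
    then show "p \<in> nrel {..<n} m (\<lambda>x. f $ x)" using xy b unfolding nrel_def supp_def by auto
  next
    fix p assume p: "p \<in> nrel {..<n} m (\<lambda>x. f $ x)"
    obtain x y where xy: "p = (x,y)" by force
    have b: "x < n" "y < n" "f $ x \<noteq> 0" "f $ y \<noteq> 0" and r: "(x,y) \<in> ?R\<^sup>*"
      using p xy unfolding nrel_def supp_def by auto
    have "x = y \<or> (\<exists>ys. S_walk A s f ys \<and> hd ys = x \<and> last ys = y)"
    proof (cases "x = y")
      case False
      then have "(x,y) \<in> ?R\<^sup>+" using r by (simp add: rtrancl_eq_or_trancl)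
      then show ?thesis using trancl_chain[of x y ?R] sw by blast
    qed simp
    then show "p \<in> nodal_rel A s f" using xy b A unfolding nodal_rel_def by auto
  qed
qed

lemma count_eq:
  fixes A :: "real mat" and m :: "nat \<Rightarrow> nat \<Rightarrow> real"
  assumes A: "A \<in> carrier_mat n n"
    and H1: "\<And>x y. adj A x y \<longleftrightarrow> adjV {..<n} m x y"
    and H2: "\<And>x y. adj A x y \<Longrightarrow> (f $ x * s x y * f $ y > 0 \<longleftrightarrow> f $ x * m x y * f $ y < 0)"
  shows "strong_nodal_count A s f = SC {..<n} m (\<lambda>x. f $ x)"
proof -
  have "{x. x < dim_row A \<and> f $ x \<noteq> 0} = supp {..<n} (\<lambda>x. f $ x)" using A unfolding supp_def by auto
  moreover have e: "nodal_rel A s f = nrel {..<n} m (\<lambda>x. f $ x)" by (rule nodal_rel_eq[OF A H1 H2])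
  ultimately show ?thesis unfolding strong_nodal_count_def SC_def by simp
qed

lemma Fset_eq:
  fixes A :: "real mat" and m :: "nat \<Rightarrow> nat \<Rightarrow> real"
  assumes H1: "\<And>x y. adj A x y \<longleftrightarrow> adjV {..<n} m x y"
  shows "{x. x < n \<and> f $ x = 0 \<and> (\<forall>y. adj A x y \<longrightarrow> f $ y = 0)} = Fz {..<n} m (\<lambda>x. f $ x)"
  unfolding Fz_def using H1 by auto

lemma quad_identity:
  fixes m :: "nat \<Rightarrow> nat \<Rightarrow> real"
  assumes fin: "finite V" and s: "symV V m" and ker: "\<forall>x\<in>V. (\<Sum>y\<in>V. m x y * f y) = 0"
  shows "2 * QV V m (\<lambda>z. c z * f z) = - (\<Sum>x\<in>V. \<Sum>y\<in>V. (c x - c y)^2 * (f x * m x y * f y))"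
proof -
  have t1: "(\<Sum>x\<in>V. \<Sum>y\<in>V. c x ^ 2 * (f x * m x y * f y)) = 0"
  proof -
    have "(\<Sum>x\<in>V. \<Sum>y\<in>V. c x ^ 2 * (f x * m x y * f y)) = (\<Sum>x\<in>V. c x ^ 2 * f x * (\<Sum>y\<in>V. m x y * f y))"
      by (simp add: sum_distrib_left mult_ac)
    also have "\<dots> = 0" using ker by simp
    finally show ?thesis .
  qed
  have t3: "(\<Sum>x\<in>V. \<Sum>y\<in>V. c y ^ 2 * (f x * m x y * f y)) = 0"
  proof -
    have "(\<Sum>x\<in>V. \<Sum>y\<in>V. c y ^ 2 * (f x * m x y * f y)) = (\<Sum>y\<in>V. \<Sum>x\<in>V. c y ^ 2 * (f x * m x y * f y))"
      by (rule sum.swap)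
    also have "\<dots> = (\<Sum>y\<in>V. c y ^ 2 * f y * (\<Sum>x\<in>V. m y x * f x))"
    proof (intro sum.cong refl)
      fix y assume y: "y \<in> V"
      have "(\<Sum>x\<in>V. c y ^ 2 * (f x * m x y * f y)) = (\<Sum>x\<in>V. c y ^ 2 * f y * (m y x * f x))"
        using s y unfolding symV_def by (intro sum.cong) (auto simp: mult_ac)
      then show "(\<Sum>x\<in>V. c y ^ 2 * (f x * m x y * f y)) = c y ^ 2 * f y * (\<Sum>x\<in>V. m y x * f x)"
        by (simp add: sum_distrib_left)
    qed
    also have "\<dots> = 0" using ker by simp
    finally show ?thesis .
  qed
  have "(\<Sum>x\<in>V. \<Sum>y\<in>V. (c x - c y)^2 * (f x * m x y * f y))
      = (\<Sum>x\<in>V. \<Sum>y\<in>V. c x ^ 2 * (f x * m x y * f y)) - 2 * (\<Sum>x\<in>V. \<Sum>y\<in>V. (c x * f x) * m x y * (c y * f y))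
        + (\<Sum>x\<in>V. \<Sum>y\<in>V. c y ^ 2 * (f x * m x y * f y))"
    by (simp add: power2_diff algebra_simps sum.distrib sum_subtractf sum_distrib_left)
  then show ?thesis unfolding QV_def t1 t3 by simp
qed

lemma Qf_QV: "Qf n m h = QV {..<n} m h"
  unfolding Qf_def QV_def by simp


lemma two_point_sum:
  fixes h :: "nat \<Rightarrow> real"
  assumes fin: "finite V" and ab: "a \<noteq> b" "a \<in> V" "b \<in> V"
  shows "(\<Sum>z\<in>V. (if z = a then \<alpha> else if z = b then \<beta> else 0) * h z) = \<alpha> * h a + \<beta> * h b"
proof -
  have "(\<Sum>z\<in>V. (if z = a then \<alpha> else if z = b then \<beta> else 0) * h z)
     = (\<Sum>z\<in>V. (if z = a then \<alpha> * h a else 0) + (if z = b then \<beta> * h b else 0))"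
    using ab by (intro sum.cong) auto
  also have "\<dots> = \<alpha> * h a + \<beta> * h b" using fin ab by (simp add: sum.distrib sum.delta')
  finally show ?thesis .
qed

lemma upper_main:
  fixes m :: "nat \<Rightarrow> nat \<Rightarrow> real" and f :: "nat \<Rightarrow> real"
  assumes s: "symV {..<n} m" and ker: "\<forall>x\<in>{..<n}. (\<Sum>y\<in>{..<n}. m x y * f y) = 0"
  shows "\<exists>L. length L = n - SC {..<n} m f \<and> SC {..<n} m f \<le> n \<and>
     (\<forall>h. (\<forall>l\<in>set L. (\<Sum>x<n. l x * h x) = 0) \<longrightarrow> QV {..<n} m h \<le> 0)"
proof -
  let ?V = "{..<n::nat}"
  let ?S = "supp ?V f"
  let ?r = "nrel ?V m f"
  have eq: "equiv ?S ?r" by (rule nrel_equiv[OF s])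
  have rS: "?r \<subseteq> ?S \<times> ?S" unfolding nrel_def by auto
  define rep where "rep x = (SOME y. y \<in> ?r `` {x})" for x
  have rep_in: "(x, rep x) \<in> ?r" if x: "x \<in> ?S" for x
  proof -
    have "x \<in> ?r `` {x}" using eq x unfolding equiv_def refl_on_def by auto
    then have "rep x \<in> ?r `` {x}" unfolding rep_def by (rule someI)
    then show ?thesis by simp
  qed
  have rep_cls: "rep x = rep y" if "?r `` {x} = ?r `` {y}" for x y
    unfolding rep_def using that by simp
  have rep_eq: "rep x = rep y" if "(x,y) \<in> ?r" for x y
    using rep_cls equiv_class_eq[OF eq that] by blast
  have repS: "rep x \<in> ?S" if "x \<in> ?S" for x using rep_in[OF that] rS by auto
  define Reps where "Reps = {x\<in>?S. rep x = x}"
  have RepsV: "Reps \<subseteq> ?V" unfolding Reps_def supp_def by auto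
  have quot: "?S // ?r = (\<lambda>x. ?r `` {x}) ` Reps"
  proof
    show "(\<lambda>x. ?r `` {x}) ` Reps \<subseteq> ?S // ?r" unfolding Reps_def quotient_image by auto
    show "?S // ?r \<subseteq> (\<lambda>x. ?r `` {x}) ` Reps"
    proof
      fix c assume "c \<in> ?S // ?r"
      then obtain x where x: "x \<in> ?S" "c = ?r `` {x}" unfolding quotient_image by auto
      define z where "z = rep x"
      have xz: "(x,z) \<in> ?r" using rep_in[OF x(1)] unfolding z_def .
      have "rep z = z" using rep_eq[OF xz] unfolding z_def by simp
      moreover have "z \<in> ?S" using repS[OF x(1)] unfolding z_def .
      moreover have "c = ?r `` {z}" using x(2) equiv_class_eq[OF eq xz] by simp
      ultimately show "c \<in> (\<lambda>x. ?r `` {x}) ` Reps" unfolding Reps_def by auto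
    qed
  qed
  have inj: "inj_on (\<lambda>x. ?r `` {x}) Reps"
  proof (rule inj_onI)
    fix x y assume xy: "x \<in> Reps" "y \<in> Reps" "?r `` {x} = ?r `` {y}"
    have "rep x = rep y" by (rule rep_cls[OF xy(3)])
    moreover have "rep x = x" "rep y = y" using xy(1,2) unfolding Reps_def by auto
    ultimately show "x = y" by simp
  qed
  have SCeq: "SC ?V m f = card Reps" unfolding SC_def quot using card_image[OF inj] .
  have finReps: "finite Reps" using RepsV finite_subset by blast
  have SCn: "SC ?V m f \<le> n" unfolding SCeq using card_mono[OF _ RepsV] by simp
  define N where "N = ?V - Reps"
  have cardN: "card N = n - SC ?V m f" unfolding N_def SCeq using RepsV finReps
    by (simp add: card_Diff_subset)
  define lfun where "lfun x = (\<lambda>z. if f x = 0 then (if z = x then 1 else 0)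
      else (if z = x then f (rep x) else if z = rep x then - f x else 0))" for x
  define L where "L = map lfun (sorted_list_of_set N)"
  have lenL: "length L = n - SC ?V m f" unfolding L_def using cardN by simp
  have setL: "set L = lfun ` N" unfolding L_def N_def by simp
  have Q: "QV ?V m h \<le> 0" if h: "\<forall>l\<in>set L. (\<Sum>x<n. l x * h x) = 0" for h
  proof -
    have hN: "(\<Sum>z<n. lfun x z * h z) = 0" if "x \<in> N" for x using h that setL by auto
    define c where "c z = h (rep z) / f (rep z)" for z
    have hc: "h z = c z * f z" if z: "z < n" for z
    proof (cases "f z = 0")
      case True
      then have "z \<in> N" using z unfolding N_def Reps_def supp_def by auto
      then have "(\<Sum>x<n. lfun z x * h x) = 0" by (rule hN)
      moreover have "(\<Sum>x<n. lfun z x * h x) = h z"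
      proof -
        have "(\<Sum>x<n. lfun z x * h x) = (\<Sum>x<n. if x = z then h z else 0)"
          unfolding lfun_def using True by (intro sum.cong) auto
        also have "\<dots> = h z" using z by simp
        finally show ?thesis .
      qed
      ultimately show ?thesis using True by simp
    next
      case False
      then have zS: "z \<in> ?S" using z unfolding supp_def by auto
      have frz: "f (rep z) \<noteq> 0" using repS[OF zS] unfolding supp_def by auto
      show ?thesis
      proof (cases "rep z = z")
        case True
        then show ?thesis unfolding c_def using False by simp
      next
        case nr: False
        then have "z \<in> N" using z unfolding N_def Reps_def by auto
        then have "(\<Sum>x<n. lfun z x * h x) = 0" by (rule hN)
        moreover have "(\<Sum>x<n. lfun z x * h x) = f (rep z) * h z + (- f z) * h (rep z)"
        proof -
          have rzV: "rep z \<in> ?V" using repS[OF zS] unfolding supp_def by auto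
          have "(\<Sum>x<n. lfun z x * h x) = (\<Sum>x\<in>?V. (if x = z then f (rep z) else if x = rep z then - f z else 0) * h x)"
            unfolding lfun_def using False by simp
          also have "\<dots> = f (rep z) * h z + (- f z) * h (rep z)"
            by (rule two_point_sum) (use nr z rzV in auto)
          finally show ?thesis .
        qed
        ultimately have "f (rep z) * h z = f z * h (rep z)" by simp
        then show ?thesis unfolding c_def using frz by (simp add: field_simps)
      qed
    qed
    have cr: "c x = c y" if "(x,y) \<in> ?r" for x y unfolding c_def using rep_eq[OF that] by simp
    have "QV ?V m h = QV ?V m (\<lambda>z. c z * f z)" unfolding QV_def using hc by (intro sum.cong refl) auto
    moreover have "2 * QV ?V m (\<lambda>z. c z * f z) = - (\<Sum>x\<in>?V. \<Sum>y\<in>?V. (c x - c y)^2 * (f x * m x y * f y))"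
      by (rule quad_identity[OF _ s ker]) simp
    moreover have "(\<Sum>x\<in>?V. \<Sum>y\<in>?V. (c x - c y)^2 * (f x * m x y * f y)) \<ge> 0"
    proof (intro sum_nonneg)
      fix x y assume x: "x \<in> ?V" and y: "y \<in> ?V"
      show "(c x - c y)^2 * (f x * m x y * f y) \<ge> 0"
      proof (cases "f x * m x y * f y \<ge> 0")
        case True then show ?thesis by simp
      next
        case False
        show ?thesis
        proof (cases "x = y")
          case True then show ?thesis by simp
        next
          case xy: False
          have "m x y \<noteq> 0" "f x \<noteq> 0" "f y \<noteq> 0" using False by auto
          then have "(x,y) \<in> Rel ?V m f" using x y xy False unfolding Rel_def adjV_def by auto
          then have "(x,y) \<in> ?r" using Rel_supp[of x y ?V m f] unfolding nrel_def by auto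
          then show ?thesis using cr by simp
        qed
      qed
    qed
    ultimately show ?thesis by simp
  qed
  show ?thesis using lenL SCn Q by blast
qed


lemma both_bounds:
  fixes a p :: "nat \<Rightarrow> nat \<Rightarrow> real" and d fv :: "nat \<Rightarrow> real" and \<mu> :: real
  assumes es: "eigsys n a p d"
    and ker: "\<And>x. x < n \<Longrightarrow> (\<Sum>y<n. a x y * fv y) = \<mu> * fv x"
    and fo: "forest {..<n} (\<lambda>x y. a x y - (if x = y then \<mu> else 0))"
  shows "SC {..<n} (\<lambda>x y. a x y - (if x = y then \<mu> else 0)) fv \<le> card {i. i < n \<and> d i \<le> \<mu>}
    \<and> card {i. i < n \<and> d i \<le> \<mu>} \<le> SC {..<n} (\<lambda>x y. a x y - (if x = y then \<mu> else 0)) fv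
        + card (Fz {..<n} (\<lambda>x y. a x y - (if x = y then \<mu> else 0)) fv)"
proof -
  interpret eigsys n a p d by (rule es)
  define m where "m = (\<lambda>x y. a x y - (if x = y then \<mu> else 0))"
  have sm: "symV {..<n} m" unfolding symV_def m_def using sym by auto
  have kerm: "\<forall>x\<in>{..<n}. (\<Sum>y\<in>{..<n}. m x y * fv y) = 0"
  proof
    fix x assume x: "x \<in> {..<n}"
    have "(\<Sum>y\<in>{..<n}. m x y * fv y) = (\<Sum>y<n. a x y * fv y) - (\<Sum>y<n. (if x = y then \<mu> else 0) * fv y)"
      unfolding m_def by (simp add: left_diff_distrib sum_subtractf)
    also have "(\<Sum>y<n. (if x = y then \<mu> else 0) * fv y) = (\<Sum>y<n. if x = y then \<mu> * fv y else 0)"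
      by (intro sum.cong) auto
    also have "\<dots> = \<mu> * fv x" using x by simp
    finally show "(\<Sum>y\<in>{..<n}. m x y * fv y) = 0" using ker x by simp
  qed
  let ?Tle = "{i. i < n \<and> d i \<le> \<mu>}"
  let ?Tgt = "{i. i < n \<and> d i > \<mu>}"
  have part: "card ?Tle + card ?Tgt = n"
  proof -
    have "?Tle \<union> ?Tgt = {..<n}" by auto
    moreover have "?Tle \<inter> ?Tgt = {}" by auto
    ultimately show ?thesis using card_Un_disjoint[of ?Tle ?Tgt] by simp
  qed
  have up: "SC {..<n} m fv \<le> card ?Tle"
  proof (rule ccontr)
    assume nt: "\<not> ?thesis"
    from upper_main[OF sm kerm] obtain L where L0: "length L = n - SC {..<n} m fv \<and> SC {..<n} m fv \<le> n \<and>
      (\<forall>h. (\<forall>l\<in>set L. (\<Sum>x<n. l x * h x) = 0) \<longrightarrow> QV {..<n} m h \<le> 0)" by (elim exE)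
    note L = L0[THEN conjunct1] L0[THEN conjunct2, THEN conjunct1] L0[THEN conjunct2, THEN conjunct2, rule_format]
    have "length L < card ?Tgt" using L(1,2) nt part by linarith
    moreover have "?Tgt \<subseteq> {..<n}" "\<forall>i\<in>?Tgt. d i > \<mu>" by auto
    ultimately obtain h where h0: "(\<exists>x<n. h x \<noteq> 0) \<and> (\<forall>l\<in>set L. (\<Sum>x<n. l x * h x) = 0)
      \<and> Qf n (\<lambda>x y. a x y - (if x = y then \<mu> else 0)) h > 0"
      using minmax_gt[of ?Tgt \<mu> L] by blast
    note h = h0[THEN conjunct2, THEN conjunct1] h0[THEN conjunct2, THEN conjunct2]
    show False using L(3)[of h] h(1) h(2) unfolding Qf_QV m_def by fastforce
  qed
  have gd: "good {..<n} m (SC {..<n} m fv + card (Fz {..<n} m fv))"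
    by (rule lower_main[OF _ sm fo[folded m_def] kerm]) simp
  have low: "card ?Tle \<le> SC {..<n} m fv + card (Fz {..<n} m fv)"
  proof (rule ccontr)
    assume nt: "\<not> ?thesis"
    from gd[unfolded good_def] obtain L where L0: "length L \<le> SC {..<n} m fv + card (Fz {..<n} m fv) \<and>
      (\<forall>h. (\<forall>l\<in>set L. (\<Sum>x\<in>{..<n}. l x * h x) = 0) \<longrightarrow> (\<exists>x\<in>{..<n}. h x \<noteq> 0) \<longrightarrow> QV {..<n} m h > 0)"
      by (elim exE)
    note L = L0[THEN conjunct1] L0[THEN conjunct2, rule_format]
    have "length L < card ?Tle" using L(1) nt by linarith
    moreover have "?Tle \<subseteq> {..<n}" "\<forall>i\<in>?Tle. d i \<le> \<mu>" by auto
    ultimately obtain h where h0: "(\<exists>x<n. h x \<noteq> 0) \<and> (\<forall>l\<in>set L. (\<Sum>x<n. l x * h x) = 0)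
      \<and> Qf n (\<lambda>x y. a x y - (if x = y then \<mu> else 0)) h \<le> 0"
      using minmax_le[of ?Tle \<mu> L] by blast
    note h = h0[THEN conjunct1] h0[THEN conjunct2, THEN conjunct1] h0[THEN conjunct2, THEN conjunct2]
    have "QV {..<n} m h > 0" using L(2)[of h] h(1,2) by fastforce
    then show False using h(3) unfolding Qf_QV m_def by simp
  qed
  show ?thesis using up low unfolding m_def by simp
qed


lemma count_mset:
  fixes d lam :: "nat \<Rightarrow> real"
  assumes "mset (map d [0..<n]) = mset (map lam [1..<Suc n])"
  shows "card {i. i < n \<and> P (d i)} = card {i. i < n \<and> P (lam (Suc i))}"
proof -
  have "card {i. i < n \<and> P (d i)} = card {i. i < length (map d [0..<n]) \<and> P (map d [0..<n] ! i)}"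
    by (intro arg_cong[where f=card] Collect_cong) auto
  also have "\<dots> = length (filter P (map d [0..<n]))"
    by (simp only: length_filter_conv_card)
  also have "\<dots> = size (filter_mset P (mset (map d [0..<n])))"
    by (metis mset_filter size_mset)
  also have "\<dots> = size (filter_mset P (mset (map lam [1..<Suc n])))" using assms by simp
  also have "\<dots> = length (filter P (map lam [1..<Suc n]))"
    by (metis mset_filter size_mset)
  also have "\<dots> = card {i. i < length (map lam [1..<Suc n]) \<and> P (map lam [1..<Suc n] ! i)}"
    by (simp only: length_filter_conv_card)
  also have "\<dots> = card {i. i < n \<and> P (lam (Suc i))}"
    by (intro arg_cong[where f=card] Collect_cong) (auto simp del: upt_Suc)
  finally show ?thesis .
qed

theorem corollary5p3:
  fixes A :: "real mat" and n k r :: nat and lam :: "nat \<Rightarrow> real" and f :: "real vec"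
  assumes A: "A \<in> carrier_mat n n" and sym: "A\<^sup>T = A"
    and acyclic: "\<not> has_cycle A"
    and lam_sorted: "\<And>i j. 1 \<le> i \<Longrightarrow> i \<le> j \<Longrightarrow> j \<le> n \<Longrightarrow> lam i \<le> lam j"
    and lam_char: "char_poly A = (\<Prod>i\<in>{1..n}. [:- lam i, 1:])"
    and k: "1 \<le> k" and r: "1 \<le> r" and kr: "k + r - 1 \<le> n"
    and below: "1 < k \<Longrightarrow> lam (k - 1) < lam k"
    and equal: "\<And>i. k \<le> i \<Longrightarrow> i \<le> k + r - 1 \<Longrightarrow> lam i = lam k"
    and above: "k + r \<le> n \<Longrightarrow> lam (k + r - 1) < lam (k + r)"
    and ef: "eigenvector A f (lam k)"
  shows "int (k + r - 1) - int (card {x. x < n \<and> f $ x = 0 \<and> (\<forall>y. adj A x y \<longrightarrow> f $ y = 0)})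
           \<le> int (strong_nodal_count A (sig A) f)
       \<and> strong_nodal_count A (sig A) f \<le> k + r - 1
       \<and> int (n - k + 1) - int (card {x. x < n \<and> f $ x = 0 \<and> (\<forall>y. adj A x y \<longrightarrow> f $ y = 0)})
           \<le> int (strong_nodal_count A (\<lambda>i j. - sig A i j) f)
       \<and> strong_nodal_count A (\<lambda>i j. - sig A i j) f \<le> n - k + 1"
proof -
  define \<mu> where "\<mu> = lam k"
  have kn: "k \<le> n" using kr r by linarith
  define es where "es = map lam [1..<Suc n]"
  have cp: "char_poly A = (\<Prod>a\<leftarrow>es. [:- a, 1:])"
  proof -
    have "(\<Prod>i\<in>{1..n}. [:- lam i, 1:]) = (\<Prod>i\<in>set [1..<Suc n]. [:- lam i, 1:])"
      by (simp only: set_upt atLeastLessThanSuc_atLeastAtMost)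
    also have "\<dots> = prod_list (map (\<lambda>i. [:- lam i, 1:]) [1..<Suc n])"
      by (rule prod.distinct_set_conv_list) simp
    finally show ?thesis unfolding lam_char es_def by (simp add: comp_def)
  qed
  obtain P d where PD: "\<forall>i<n. \<forall>x<n. (\<Sum>y<n. A $$ (x,y) * P $$ (y,i)) = d i * P $$ (x,i)"
     "\<forall>\<beta>. (\<forall>x<n. (\<Sum>i<n. \<beta> i * P $$ (x,i)) = 0) \<longrightarrow> (\<forall>i<n. \<beta> i = 0)"
     "mset (map d [0..<n]) = mset es"
    using spectral[OF A sym cp] by blast
  define p where "p i x = P $$ (x,i)" for i x
  have symA: "A $$ (x,y) = A $$ (y,x)" if "x < n" "y < n" for x y
    using sym that A by (metis carrier_matD(1) carrier_matD(2) index_transpose_mat(1))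
  have es1: "eigsys n (\<lambda>x y. A $$ (x,y)) p d"
    by unfold_locales (use symA PD in \<open>auto simp: p_def\<close>)
  have es2: "eigsys n (\<lambda>x y. - A $$ (x,y)) p (\<lambda>i. - d i)"
  proof unfold_locales
    fix x y assume "x < n" "y < n" then show "- A $$ (x,y) = - A $$ (y,x)" using symA by simp
  next
    fix i x assume ix: "i < n" "x < n"
    have "(\<Sum>y<n. - A $$ (x, y) * p i y) = - (\<Sum>y<n. A $$ (x, y) * p i y)" by (simp add: sum_negf)
    then show "(\<Sum>y<n. - A $$ (x, y) * p i y) = - d i * p i x" using PD(1) ix unfolding p_def by simp
  next
    fix \<beta> assume "\<forall>x<n. (\<Sum>i<n. \<beta> i * p i x) = 0"
    then show "\<forall>i<n. \<beta> i = 0" using PD(2) unfolding p_def by blast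
  qed
  define fv where "fv x = f $ x" for x
  have fc: "f \<in> carrier_vec n" and Af: "A *\<^sub>v f = \<mu> \<cdot>\<^sub>v f"
    using ef A unfolding eigenvector_def \<mu>_def by auto
  have ker1: "(\<Sum>y<n. A $$ (x,y) * fv y) = \<mu> * fv x" if x: "x < n" for x
  proof -
    have "(A *\<^sub>v f) $ x = (\<Sum>y<n. A $$ (x,y) * fv y)"
      using A fc x unfolding fv_def by (simp add: scalar_prod_def atLeast0LessThan)
    then show ?thesis using Af x fc unfolding fv_def by simp
  qed
  have ker2: "(\<Sum>y<n. - A $$ (x,y) * fv y) = - \<mu> * fv x" if x: "x < n" for x
    using ker1[OF x] by (simp add: sum_negf)
  define m1 where "m1 = (\<lambda>x y. A $$ (x,y) - (if x = y then \<mu> else 0))"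
  define m2 where "m2 = (\<lambda>x y. - A $$ (x,y) - (if x = y then - \<mu> else 0))"
  have H1a: "adj A x y \<longleftrightarrow> adjV {..<n} m1 x y" for x y
    using A unfolding adj_def adjV_def m1_def by auto
  have H1b: "adj A x y \<longleftrightarrow> adjV {..<n} m2 x y" for x y
    using A unfolding adj_def adjV_def m2_def by auto
  have fo1: "forest {..<n} m1"
  proof -
    have "adjV {..<n} m1 = adj A" using H1a by (intro ext) simp
    then show ?thesis using acyclic unfolding forest_def has_cycle_def by simp
  qed
  have fo2: "forest {..<n} m2"
  proof -
    have "adjV {..<n} m2 = adj A" using H1b by (intro ext) simp
    then show ?thesis using acyclic unfolding forest_def has_cycle_def by simp
  qed
  have H2a: "f $ x * sig A x y * f $ y > 0 \<longleftrightarrow> f $ x * m1 x y * f $ y < 0" if "adj A x y" for x y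
  proof -
    have t: "A $$ (x,y) \<noteq> 0" "x \<noteq> y" using that unfolding adj_def by auto
    have "f $ x * sig A x y * f $ y = - (f $ x * A $$ (x,y) * f $ y) / \<bar>A $$ (x,y)\<bar>"
      unfolding sig_def by (simp add: field_simps)
    moreover have pos: "\<bar>A $$ (x,y)\<bar> > 0" using t by simp
    moreover have "(f $ x * A $$ (x,y) * f $ y) / \<bar>A $$ (x,y)\<bar> < 0 \<longleftrightarrow> f $ x * A $$ (x,y) * f $ y < 0"
      using pos by (simp add: divide_less_0_iff)
    ultimately show ?thesis unfolding m1_def using t by simp
  qed
  have H2b: "f $ x * (- sig A x y) * f $ y > 0 \<longleftrightarrow> f $ x * m2 x y * f $ y < 0" if "adj A x y" for x y
  proof -
    have t: "A $$ (x,y) \<noteq> 0" "x \<noteq> y" using that unfolding adj_def by auto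
    have "f $ x * (- sig A x y) * f $ y = (f $ x * A $$ (x,y) * f $ y) / \<bar>A $$ (x,y)\<bar>"
      unfolding sig_def by (simp add: field_simps)
    moreover have "\<bar>A $$ (x,y)\<bar> > 0" using t by simp
    ultimately show ?thesis unfolding m2_def using t by (simp add: zero_less_divide_iff)
  qed
  have SC1: "strong_nodal_count A (sig A) f = SC {..<n} m1 fv"
    unfolding fv_def by (rule count_eq[OF A H1a H2a])
  have SC2: "strong_nodal_count A (\<lambda>i j. - sig A i j) f = SC {..<n} m2 fv"
    unfolding fv_def by (rule count_eq[OF A H1b]) (use H2b in simp)
  have F1: "{x. x < n \<and> f $ x = 0 \<and> (\<forall>y. adj A x y \<longrightarrow> f $ y = 0)} = Fz {..<n} m1 fv"
    unfolding fv_def by (rule Fset_eq[OF H1a])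
  have F2: "{x. x < n \<and> f $ x = 0 \<and> (\<forall>y. adj A x y \<longrightarrow> f $ y = 0)} = Fz {..<n} m2 fv"
    unfolding fv_def by (rule Fset_eq[OF H1b])
  have B1: "SC {..<n} m1 fv \<le> card {i. i < n \<and> d i \<le> \<mu>}
    \<and> card {i. i < n \<and> d i \<le> \<mu>} \<le> SC {..<n} m1 fv + card (Fz {..<n} m1 fv)"
    using both_bounds[OF es1 ker1] fo1 unfolding m1_def by simp
  have B2: "SC {..<n} m2 fv \<le> card {i. i < n \<and> - d i \<le> - \<mu>}
    \<and> card {i. i < n \<and> - d i \<le> - \<mu>} \<le> SC {..<n} m2 fv + card (Fz {..<n} m2 fv)"
    using both_bounds[OF es2 ker2] fo2 unfolding m2_def by simp
  have c1: "card {i. i < n \<and> d i \<le> \<mu>} = k + r - 1"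
  proof -
    have "card {i. i < n \<and> d i \<le> \<mu>} = card {i. i < n \<and> lam (Suc i) \<le> \<mu>}"
      using count_mset[OF PD(3)[unfolded es_def], of "\<lambda>t. t \<le> \<mu>"] by simp
    also have "{i. i < n \<and> lam (Suc i) \<le> \<mu>} = {..<k + r - 1}"
    proof (rule subset_antisym; rule subsetI)
      fix i assume i: "i \<in> {i. i < n \<and> lam (Suc i) \<le> \<mu>}"
      show "i \<in> {..<k + r - 1}"
      proof (rule ccontr)
        assume "i \<notin> {..<k + r - 1}"
        then have "k + r \<le> Suc i" by simp
        moreover have "Suc i \<le> n" using i by simp
        ultimately have "lam (k + r) \<le> lam (Suc i)" using lam_sorted[of "k + r" "Suc i"] k by simp
        moreover have "lam (k + r - 1) < lam (k + r)" using above \<open>k + r \<le> Suc i\<close> \<open>Suc i \<le> n\<close> by simp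
        moreover have "lam (k + r - 1) = lam k" using equal[of "k + r - 1"] r by simp
        ultimately show False using i unfolding \<mu>_def by simp
      qed
    next
      fix i assume i: "i \<in> {..<k + r - 1}"
      then have "i < n" using kr by simp
      moreover have "lam (Suc i) \<le> \<mu>"
      proof (cases "Suc i < k")
        case True
        then show ?thesis using lam_sorted[of "Suc i" k] kn unfolding \<mu>_def by simp
      next
        case False
        then show ?thesis using equal[of "Suc i"] i unfolding \<mu>_def by simp
      qed
      ultimately show "i \<in> {i. i < n \<and> lam (Suc i) \<le> \<mu>}" by simp
    qed
    finally show ?thesis by simp
  qed
  have c2: "card {i. i < n \<and> - d i \<le> - \<mu>} = n - k + 1"
  proof -
    have "card {i. i < n \<and> - d i \<le> - \<mu>} = card {i. i < n \<and> - lam (Suc i) \<le> - \<mu>}"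
      using count_mset[OF PD(3)[unfolded es_def], of "\<lambda>t. - t \<le> - \<mu>"] by simp
    also have "{i. i < n \<and> - lam (Suc i) \<le> - \<mu>} = {k - 1..<n}"
    proof (rule subset_antisym; rule subsetI)
      fix i assume i: "i \<in> {i. i < n \<and> - lam (Suc i) \<le> - \<mu>}"
      show "i \<in> {k - 1..<n}"
      proof (rule ccontr)
        assume "i \<notin> {k - 1..<n}"
        then have "Suc i < k" using i by auto
        then have "1 < k" by simp
        have "lam (Suc i) \<le> lam (k - 1)" using lam_sorted[of "Suc i" "k - 1"] \<open>Suc i < k\<close> kn by simp
        moreover have "lam (k - 1) < lam k" using below \<open>1 < k\<close> by simp
        ultimately show False using i unfolding \<mu>_def by simp
      qed
    next
      fix i assume i: "i \<in> {k - 1..<n}"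
      then have "k \<le> Suc i" "Suc i \<le> n" using k by auto
      then have "lam k \<le> lam (Suc i)" using lam_sorted[of k "Suc i"] k by simp
      then show "i \<in> {i. i < n \<and> - lam (Suc i) \<le> - \<mu>}" using i unfolding \<mu>_def by simp
    qed
    finally show ?thesis using k kn by simp
  qed
  show ?thesis
    unfolding SC1 SC2 F1 using B1 B2 c1 c2 F1 F2 by (simp add: of_nat_diff)
qed


end
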